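(* Let $\omega=(\tilde\omega,\omega_d)\in\mathbb R^d$, $d\geq3$, be non-resonant with $\tilde\omega\in\mathbb R^{d-1}$ such that there is a sequence $\{\bar k_j\}\subset\mathbb Z^{d-1}$ with $\lim_{j\to\infty}\frac{\ln|\langle\tilde\omega,\bar k_j\rangle|}{\|\bar k_j\|}=-\infty$. Then: (a) there exists a real entire Hamiltonian $H$ of the form $H(\theta,r)=\langle\omega,r\rangle+\mathcal O(r^2)$ whose Birkhoff normal form at $\mathcal{T}_0$ is $N(r)=\langle\omega,r\rangle$, and such that $\mathcal{T}_0$ is diffusive with $T(r_n)\leq r_n^{-n}$ for a sequence $r_n\to0$; (b) there exists a real entire Hamiltonian $H$ of the form $H(\theta,r)=\langle\omega,r\rangle+\mathcal O(r^2)$ such that $\mathcal{T}_0$ is diffusive and $T(r_n)\leq r_n^{-4}$ for a sequence $r_n\to0$.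
   Context: $\mathcal{T}_0=\mathbb{T}^d\times\{0\}$; $\|k\|=\max_m|k_m|$; non-resonant means the coordinates of $\omega$ are rationally independent. Real entire: extends holomorphically to $(\mathbb C/\mathbb Z)^d\times\mathbb C^d$, real on real arguments. $\Phi^t_H$ is the Hamiltonian flow for $d\theta\wedge dr$. $T(r)=\inf_{\theta\in\mathbb{T}^d,|r'|\leq r}\{t>0:\operatorname{dist}(\Phi^t_H(\theta,r'),\mathcal{T}_0)=1/r\}$; $\mathcal{T}_0$ is diffusive if $T(r)$ exists for all sufficiently small $r>0$. Birkhoff normal form: formal power series $N_H(r)$ such that some formal series $f(\theta,r)=\sum_j a_j(\theta)r^j=\mathcal O(r^2)$ with coefficients real analytic near $\mathbb{T}^d$ satisfies $H(\theta,r+\partial_\theta f(\theta,r))=N_H(r)$. *)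

theory Defs
  imports "HOL-Analysis.Analysis"
begin

text \<open>Points of the cover R^d x R^d of T^d x R^d; theta and r are vectors indexed by a finite type.\<close>

definition cvec :: "real^'n \<Rightarrow> complex^'n" where
  "cvec x = (\<chi> i. complex_of_real (x $ i))"

definition c_entire2 :: "((complex^'n) \<times> (complex^'n) \<Rightarrow> complex) \<Rightarrow> bool" where
  "c_entire2 F \<longleftrightarrow>
     (\<forall>z. \<exists>L. (F has_derivative L) (at z) \<and>
            (\<forall>c u v. L (c *s u, c *s v) = c * L (u, v)))"

definition c_holo_on :: "(complex^'n) set \<Rightarrow> (complex^'n \<Rightarrow> complex) \<Rightarrow> bool" where
  "c_holo_on U F \<longleftrightarrow>
     (\<forall>z\<in>U. \<exists>L. (F has_derivative L) (at z) \<and> (\<forall>c v. L (c *s v) = c * L v))"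

text \<open>Real entire Hamiltonian on T^d x R^d: 1-periodic in theta, extends to an entire
  function on (C/Z)^d x C^d which restricts to H on real arguments.\<close>

definition real_entire_ham :: "(real^'n \<Rightarrow> real^'n \<Rightarrow> real) \<Rightarrow> bool" where
  "real_entire_ham H \<longleftrightarrow>
     (\<forall>\<theta> r i. H (\<theta> + axis i 1) r = H \<theta> r) \<and>
     (\<exists>F. c_entire2 F \<and> (\<forall>z w i. F (z + axis i 1, w) = F (z, w)) \<and>
          (\<forall>\<theta> r. F (cvec \<theta>, cvec r) = complex_of_real (H \<theta> r)))"

definition real_analytic_periodic :: "(real^'n \<Rightarrow> real) \<Rightarrow> bool" where
  "real_analytic_periodic a \<longleftrightarrow>
     (\<forall>\<theta> i. a (\<theta> + axis i 1) = a \<theta>) \<and>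
     (\<exists>U F. open U \<and> range cvec \<subseteq> U \<and> c_holo_on U F \<and>
            (\<forall>\<theta>. F (cvec \<theta>) = complex_of_real (a \<theta>)))"

definition grad :: "(real^'n \<Rightarrow> real) \<Rightarrow> real^'n \<Rightarrow> real^'n" where
  "grad f x = (\<chi> i. deriv (\<lambda>s. f (x + axis i s)) 0)"

definition ham_form :: "(real^'n \<Rightarrow> real^'n \<Rightarrow> real) \<Rightarrow> real^'n \<Rightarrow> bool" where
  "ham_form H \<omega> \<longleftrightarrow>
     (\<exists>C \<delta>. \<delta> > 0 \<and> (\<forall>\<theta> r. norm r < \<delta> \<longrightarrow> \<bar>H \<theta> r - \<omega> \<bullet> r\<bar> \<le> C * norm r ^ 2))"

definition ham_vf :: "(real^'n \<Rightarrow> real^'n \<Rightarrow> real) \<Rightarrow> (real^'n) \<times> (real^'n) \<Rightarrow> (real^'n) \<times> (real^'n)" where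
  "ham_vf H p = (grad (\<lambda>r. H (fst p) r) (snd p), - grad (\<lambda>\<theta>. H \<theta> (snd p)) (fst p))"

text \<open>The set whose infimum is T(rho): times t>0 at which the flow (defined on [0,t])
  from a point (theta,r') with |r'| <= rho is at distance 1/rho from T_0.\<close>

definition escape_times :: "(real^'n \<Rightarrow> real^'n \<Rightarrow> real) \<Rightarrow> real \<Rightarrow> real set" where
  "escape_times H \<rho> = {t. t > 0 \<and>
     (\<exists>\<theta> r0 (\<gamma> :: real \<Rightarrow> (real^'n) \<times> (real^'n)).
        norm r0 \<le> \<rho> \<and> \<gamma> 0 = (\<theta>, r0) \<and>
        (\<forall>s\<in>{0..t}. (\<gamma> has_vector_derivative ham_vf H (\<gamma> s)) (at s within {0..t})) \<and>
        norm (snd (\<gamma> t)) = 1 / \<rho>)}"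

definition T_time :: "(real^'n \<Rightarrow> real^'n \<Rightarrow> real) \<Rightarrow> real \<Rightarrow> real" where
  "T_time H \<rho> = Inf (escape_times H \<rho>)"

definition diffusive :: "(real^'n \<Rightarrow> real^'n \<Rightarrow> real) \<Rightarrow> bool" where
  "diffusive H \<longleftrightarrow> (\<exists>\<rho>0>0. \<forall>\<rho>. 0 < \<rho> \<and> \<rho> < \<rho>0 \<longrightarrow> escape_times H \<rho> \<noteq> {})"

definition mdeg :: "('n::finite \<Rightarrow> nat) \<Rightarrow> nat" where
  "mdeg j = (\<Sum>i\<in>UNIV. j i)"

definition mmono :: "real^'n \<Rightarrow> ('n \<Rightarrow> nat) \<Rightarrow> real" where
  "mmono r j = (\<Prod>i\<in>UNIV. (r $ i) ^ (j i))"

text \<open>Birkhoff normal form N (formal series with coefficients N j): there is a formal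
  series f = sum_j a_j(theta) r^j = O(r^2) with real analytic coefficients such that
  H(theta, r + d_theta f(theta,r)) = N(r) as formal series in r; equivalently, for every
  order K, the identity holds modulo O(|r|^(K+1)) with f and N truncated at degree K.\<close>

definition has_BNF :: "(real^'n \<Rightarrow> real^'n \<Rightarrow> real) \<Rightarrow> (('n \<Rightarrow> nat) \<Rightarrow> real) \<Rightarrow> bool" where
  "has_BNF H N \<longleftrightarrow>
     (\<exists>a :: ('n \<Rightarrow> nat) \<Rightarrow> real^'n \<Rightarrow> real.
        (\<forall>j. real_analytic_periodic (a j)) \<and>
        (\<forall>j. mdeg j \<le> 1 \<longrightarrow> a j = (\<lambda>_. 0)) \<and>
        (\<forall>K \<theta>. \<exists>C \<delta>. \<delta> > 0 \<and> (\<forall>r. norm r < \<delta> \<longrightarrow>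
           \<bar>H \<theta> (r + (\<Sum>j\<in>{j. mdeg j \<le> K}. mmono r j *\<^sub>R grad (a j) \<theta>))
             - (\<Sum>j\<in>{j. mdeg j \<le> K}. N j * mmono r j)\<bar> \<le> C * norm r ^ (K + 1))))"

definition lin_coeffs :: "real^'n \<Rightarrow> ('n \<Rightarrow> nat) \<Rightarrow> real" where
  "lin_coeffs \<omega> j = (\<Sum>i\<in>UNIV. if j = (\<lambda>k. if k = i then 1 else 0) then \<omega> $ i else 0)"

end

theory Submission
  imports Defs
begin


lemma series_has_derivative:
  fixes f :: "nat \<Rightarrow> 'a::real_normed_vector \<Rightarrow> 'b::banach" and f' :: "nat \<Rightarrow> 'a \<Rightarrow> 'a \<Rightarrow> 'b"
  assumes df: "\<And>n x. (f n has_derivative f' n x) (at x)"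
    and bd: "\<And>R. \<exists>M. summable M \<and> (\<forall>n x. norm x \<le> R \<longrightarrow> norm (f n x) \<le> M n \<and> (\<forall>h. norm (f' n x h) \<le> M n * norm h))"
  shows "((\<lambda>x. \<Sum>n. f n x) has_derivative (\<lambda>h. \<Sum>n. f' n x0 h)) (at x0)"
proof -
  define R where "R = norm x0 + 1"
  obtain M where M: "summable M" and Mb: "\<And>n x. norm x \<le> R \<Longrightarrow> norm (f n x) \<le> M n"
     and Mb': "\<And>n x h. norm x \<le> R \<Longrightarrow> norm (f' n x h) \<le> M n * norm h"
    using bd[of R] by blast
  define S where "S = ball (0::'a) R"
  have x0S: "x0 \<in> S" unfolding S_def R_def by simp
  have SR: "x \<in> S \<Longrightarrow> norm x \<le> R" for x unfolding S_def by simp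
  have M0: "0 \<le> M n" for n using Mb[of 0 n] R_def by (smt (verit) norm_ge_zero norm_zero)
  have sf': "summable (\<lambda>i. f' i x h)" if "x \<in> S" for x h
    by (rule summable_comparison_test[of _ "\<lambda>i. M i * norm h"])
       (use Mb'[OF SR[OF that]] summable_mult2[OF M] in auto)
  have sf: "summable (\<lambda>i. f i x)" if "x \<in> S" for x
    by (rule summable_comparison_test[of _ M]) (use Mb[OF SR[OF that]] M in auto)
  have unif: "\<forall>\<^sub>F n in sequentially. \<forall>x\<in>S. \<forall>h. norm (sum (\<lambda>i. f' i x h) {..<n} - (\<Sum>i. f' i x h)) \<le> e * norm h"
    if e0: "e > 0" for e
  proof -
    obtain N where N: "\<And>n. n \<ge> N \<Longrightarrow> norm (\<Sum>i. M (i + n)) < e"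
      using suminf_exist_split[OF e0 M] by blast
    show ?thesis unfolding eventually_sequentially
    proof (intro exI allI impI ballI)
      fix n x h assume n: "N \<le> n" and x: "x \<in> S"
      have s1: "summable (\<lambda>i. f' (i+n) x h)" using sf'[OF x] summable_iff_shift[of "\<lambda>i. f' i x h" n] by simp
      have sM: "summable (\<lambda>i. M (i+n))" using M summable_iff_shift[of M n] by simp
      have "sum (\<lambda>i. f' i x h) {..<n} - (\<Sum>i. f' i x h) = - (\<Sum>i. f' (i+n) x h)"
        using suminf_split_initial_segment[OF sf'[OF x], where k=n] by simp
      then have eq1: "norm (sum (\<lambda>i. f' i x h) {..<n} - (\<Sum>i. f' i x h)) = norm (\<Sum>i. f' (i+n) x h)" by simp
      have sn: "summable (\<lambda>i. norm (f' (i+n) x h))"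
        by (rule summable_comparison_test[of _ "\<lambda>i. M (i+n) * norm h"])
           (use Mb'[OF SR[OF x]] summable_mult2[OF sM] in simp_all)
      have "norm (\<Sum>i. f' (i+n) x h) \<le> (\<Sum>i. norm (f' (i+n) x h))"
        by (rule summable_norm[OF sn])
      also have "\<dots> \<le> (\<Sum>i. M (i+n) * norm h)"
        by (rule suminf_le) (use Mb'[OF SR[OF x]] summable_mult2[OF sM] sn in simp_all)
      also have "\<dots> = (\<Sum>i. M (i+n)) * norm h" using suminf_mult2[OF sM] by simp
      also have "\<dots> \<le> e * norm h"
        using N[OF n] suminf_nonneg[OF sM] M0 by (intro mult_right_mono) simp_all
      finally show "norm (sum (\<lambda>i. f' i x h) {..<n} - (\<Sum>i. f' i x h)) \<le> e * norm h" using eq1 by simp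
    qed
  qed
  have cS: "convex S" unfolding S_def by simp
  have "\<exists>g. \<forall>x\<in>S. (\<lambda>n. f n x) sums (g x) \<and> (g has_derivative (\<lambda>h. \<Sum>n. f' n x h)) (at x within S)"
    by (rule has_derivative_series[where S=S and f=f and f'=f' and g'="\<lambda>x h. \<Sum>n. f' n x h", OF cS _ unif x0S summable_sums[OF sf[OF x0S]]])
       (use df in \<open>simp add: has_derivative_at_withinI\<close>)
  then obtain g where g: "\<And>x. x \<in> S \<Longrightarrow> (\<lambda>n. f n x) sums (g x) \<and> (g has_derivative (\<lambda>h. \<Sum>n. f' n x h)) (at x within S)"
    by blast
  have oS: "open S" unfolding S_def by simp
  have gd0: "(g has_derivative (\<lambda>h. \<Sum>n. f' n x0 h)) (at x0 within S)"
    using g[OF x0S] by blast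
  have gd: "(g has_derivative (\<lambda>h. \<Sum>n. f' n x0 h)) (at x0)"
    using gd0 unfolding at_within_open[OF x0S oS] .
  have geq: "g x = (\<Sum>n. f n x)" if "x \<in> S" for x
  proof -
    have "(\<lambda>n. f n x) sums g x" using g[OF that] by blast
    then show ?thesis by (simp add: sums_iff)
  qed
  show ?thesis
    by (rule has_derivative_transform_within_open[OF gd oS x0S geq])
qed


lemma grad_eq:
  fixes f :: "real^'n \<Rightarrow> real"
  assumes d: "(f has_derivative f') (at x)"
  shows "grad f x = (\<chi> i. f' (axis i 1))"
proof -
  have bl: "bounded_linear f'" using d by (rule has_derivative_bounded_linear)
  have "deriv (\<lambda>s. f (x + axis i s)) 0 = f' (axis i 1)" for i
  proof -
    define a where "a = axis i (1::real)"
    have ax: "axis i s = s *\<^sub>R a" for s :: real by (simp add: a_def vec_eq_iff axis_def)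
    have d1: "((\<lambda>s::real. x + s *\<^sub>R a) has_derivative (\<lambda>h. h *\<^sub>R a)) (at 0)"
      by (auto intro!: derivative_eq_intros)
    have d2: "(f has_derivative f') (at (x + 0 *\<^sub>R a))" using d by simp
    have "((\<lambda>s. f (x + s *\<^sub>R a)) has_derivative (\<lambda>h. f' (h *\<^sub>R a))) (at 0)"
      using diff_chain_at[OF d1 d2] by (simp add: o_def)
    moreover have "(\<lambda>h. f' (h *\<^sub>R a)) = (*) (f' a)"
      using linear_cmul[OF bounded_linear.linear[OF bl]] by (auto simp: fun_eq_iff mult.commute)
    ultimately have "((\<lambda>s. f (x + s *\<^sub>R a)) has_real_derivative f' a) (at 0)"
      by (simp add: has_field_derivative_def)
    then have "deriv (\<lambda>s. f (x + s *\<^sub>R a)) 0 = f' a" by (rule DERIV_imp_deriv)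
    moreover have e: "(\<lambda>s. f (x + axis i s)) = (\<lambda>s. f (x + s *\<^sub>R a))" by (simp only: ax)
    ultimately show ?thesis unfolding e a_def[symmetric] by simp
  qed
  then show ?thesis unfolding grad_def by simp
qed

lemma has_derivative_ccos:
  fixes g :: "'a::real_normed_vector \<Rightarrow> complex"
  assumes "(g has_derivative g') (at x)"
  shows "((\<lambda>x. cos (g x)) has_derivative (\<lambda>h. - sin (g x) * g' h)) (at x)"
  using has_derivative_compose[OF assms, of cos "(*) (- sin (g x))"] DERIV_cos[of "g x"]
  by (simp add: has_field_derivative_def)

lemma has_derivative_csin:
  fixes g :: "'a::real_normed_vector \<Rightarrow> complex"
  assumes "(g has_derivative g') (at x)"
  shows "((\<lambda>x. sin (g x)) has_derivative (\<lambda>h. cos (g x) * g' h)) (at x)"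
  using has_derivative_compose[OF assms, of sin "(*) (cos (g x))"] DERIV_sin[of "g x"]
  by (simp add: has_field_derivative_def)

locale sysd =
  fixes \<omega> :: "real^'n" and i0 m :: 'n and k :: "nat \<Rightarrow> 'n \<Rightarrow> int"
    and c :: "nat \<Rightarrow> real" and p :: "nat \<Rightarrow> nat" and N :: "nat \<Rightarrow> real"
  assumes k_i0: "\<And>j. k j i0 = 0"
    and km: "\<And>j. k j m \<noteq> 0"
    and kN: "\<And>j i. \<bar>real_of_int (k j i)\<bar> \<le> N j"
    and dnz: "\<And>j. (\<chi> i. real_of_int (k j i)) \<bullet> \<omega> \<noteq> 0"
    and sgn: "\<And>j. 0 \<le> c j * real_of_int (k j m) / ((\<chi> i. real_of_int (k j i)) \<bullet> \<omega>)"
    and csum: "\<And>R A. 0 \<le> R \<Longrightarrow> 0 \<le> A \<Longrightarrow>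
       summable (\<lambda>j. \<bar>c j\<bar> * ((real j + 3) * (1+R)^(j+2) * (1 + A * N j) * exp (A * N j * R)))"
    and p2: "\<And>j. 2 \<le> p j" and pj: "\<And>j. p j \<le> j + 2"
begin

definition kv :: "nat \<Rightarrow> real^'n" where "kv j = (\<chi> i. real_of_int (k j i))"
definition dl :: "nat \<Rightarrow> real" where "dl j = kv j \<bullet> \<omega>"
definition Phi :: "real^'n \<Rightarrow> real \<Rightarrow> real" where
  "Phi \<theta> s = (\<Sum>j. c j * s^(p j) * cos (2*pi*(kv j \<bullet> \<theta>)))"
definition H :: "real^'n \<Rightarrow> real^'n \<Rightarrow> real" where "H \<theta> r = \<omega> \<bullet> r + Phi \<theta> (r$i0)"
definition W :: "nat \<Rightarrow> real \<Rightarrow> real \<Rightarrow> real" where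
  "W j R A = (real j + 3) * (1+R)^(j+2) * (1 + A * N j) * exp (A * N j * R)"

lemma N0: "0 \<le> N j" using kN[of j i0] by (simp add: k_i0)

lemma dl_nz: "dl j \<noteq> 0" using dnz[of j] by (simp add: dl_def kv_def)

lemma kv_i0: "kv j \<bullet> axis i0 x = 0" by (simp add: inner_axis kv_def k_i0)

lemma kv_nth_i0: "kv j $ i0 = 0" by (simp add: kv_def k_i0)

lemma norm_kv: "norm (kv j) \<le> real CARD('n) * N j"
proof -
  have "norm (kv j) \<le> (\<Sum>i\<in>UNIV. \<bar>kv j $ i\<bar>)" by (rule norm_le_l1_cart)
  also have "\<dots> \<le> (\<Sum>i\<in>(UNIV::'n set). N j)" by (rule sum_mono) (simp add: kv_def kN)
  also have "\<dots> = real CARD('n) * N j" by simp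
  finally show ?thesis .
qed

lemma kv_inner_bound: "\<bar>kv j \<bullet> h\<bar> \<le> real CARD('n) * N j * norm h"
proof -
  have "\<bar>kv j \<bullet> h\<bar> \<le> norm (kv j) * norm h" by (rule Cauchy_Schwarz_ineq2)
  also have "\<dots> \<le> real CARD('n) * N j * norm h" by (rule mult_right_mono[OF norm_kv]) simp
  finally show ?thesis .
qed

lemma Wsum: "0 \<le> R \<Longrightarrow> 0 \<le> A \<Longrightarrow> summable (\<lambda>j. \<bar>c j\<bar> * W j R A)"
  using csum unfolding W_def by blast

lemma Wge: 
  assumes "0 \<le> R" "0 \<le> A" "0 \<le> a" "a \<le> real j + 3" "0 \<le> b" "b \<le> (1+R)^(j+2)" "0 \<le> e" "e \<le> 1 + A * N j"
  shows "a * b * e \<le> W j R A"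
proof -
  have "a * b * e \<le> (real j + 3) * (1+R)^(j+2) * (1 + A * N j)"
    using assms by (intro mult_mono) auto
  also have "\<dots> = (real j + 3) * (1+R)^(j+2) * (1 + A * N j) * 1" by simp
  also have "\<dots> \<le> (real j + 3) * (1+R)^(j+2) * (1 + A * N j) * exp (A * N j * R)"
    using assms N0[of j] by (intro mult_left_mono) auto
  finally show ?thesis unfolding W_def .
qed

lemma pow_le: "\<bar>s::real\<bar>^(p j) \<le> (1+\<bar>s\<bar>)^(j+2)"
proof -
  have "\<bar>s\<bar>^(p j) \<le> (1+\<bar>s\<bar>)^(p j)" by (rule power_mono) auto
  also have "\<dots> \<le> (1+\<bar>s\<bar>)^(j+2)" by (intro power_increasing pj) auto
  finally show ?thesis .
qed

lemma pow_le': "\<bar>s::real\<bar> \<le> R \<Longrightarrow> \<bar>s\<bar>^(p j) \<le> (1+R)^(j+2)"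
  using pow_le[of s j] power_mono[of "1+\<bar>s\<bar>" "1+R" "j+2"] by simp

end


lemmas has_derivative_vec_nth[derivative_intros] = bounded_linear.has_derivative[OF bounded_linear_vec_nth]

context sysd begin

lemma Phi_dtheta:
  "((\<lambda>\<theta>. Phi \<theta> s) has_derivative
     (\<lambda>h. \<Sum>j. - (c j * s^(p j) * sin (2*pi*(kv j \<bullet> \<theta>)) * (2*pi*(kv j \<bullet> h))))) (at \<theta>)"
  unfolding Phi_def
proof (rule series_has_derivative)
  fix j and \<theta> :: "real^'n"
  show "((\<lambda>\<theta>. c j * s^(p j) * cos (2*pi*(kv j \<bullet> \<theta>))) has_derivative
     (\<lambda>h. - (c j * s^(p j) * sin (2*pi*(kv j \<bullet> \<theta>)) * (2*pi*(kv j \<bullet> h))))) (at \<theta>)"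
    by (auto intro!: derivative_eq_intros simp: fun_eq_iff algebra_simps)
next
  fix R :: real
  let ?A = "2*pi*real CARD('n)"
  show "\<exists>M. summable M \<and> (\<forall>n x. norm x \<le> R \<longrightarrow>
      norm (c n * s^(p n) * cos (2*pi*(kv n \<bullet> x))) \<le> M n \<and>
      (\<forall>h. norm (- (c n * s^(p n) * sin (2*pi*(kv n \<bullet> x)) * (2*pi*(kv n \<bullet> h)))) \<le> M n * norm h))"
  proof (intro exI conjI allI impI)
    show "summable (\<lambda>j. \<bar>c j\<bar> * W j \<bar>s\<bar> ?A)" by (rule Wsum) auto
  next
    fix j and x :: "real^'n" and h :: "real^'n"
    have b1: "\<bar>s\<bar>^(p j) \<le> (1+\<bar>s\<bar>)^(j+2)" by (rule pow_le)
    have An: "0 \<le> 2*pi*real CARD('n) * N j" using N0[of j] by simp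
    have cb: "\<bar>cos (2*pi*(kv j \<bullet> x))\<bar> \<le> 1 + 2*pi*real CARD('n) * N j"
      using abs_cos_le_one[of "2*pi*(kv j \<bullet> x)"] An by linarith
    have "norm (c j * s^(p j) * cos (2*pi*(kv j \<bullet> x))) = \<bar>c j\<bar> * (1 * \<bar>s\<bar>^(p j) * \<bar>cos (2*pi*(kv j \<bullet> x))\<bar>)"
      by (simp add: abs_mult power_abs)
    also have "\<dots> \<le> \<bar>c j\<bar> * W j \<bar>s\<bar> ?A"
      by (intro mult_left_mono Wge) (use b1 An cb in auto)
    finally show "norm (c j * s^(p j) * cos (2*pi*(kv j \<bullet> x))) \<le> \<bar>c j\<bar> * W j \<bar>s\<bar> ?A" .
    have kb: "2*pi*\<bar>kv j \<bullet> h\<bar> \<le> ?A * N j * norm h"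
      using kv_inner_bound[of j h] by (simp add: mult.assoc)
    have "norm (- (c j * s^(p j) * sin (2*pi*(kv j \<bullet> x)) * (2*pi*(kv j \<bullet> h))))
        = \<bar>c j\<bar> * (\<bar>s\<bar>^(p j) * \<bar>sin (2*pi*(kv j \<bullet> x))\<bar> * (2*pi*\<bar>kv j \<bullet> h\<bar>))"
      by (simp add: abs_mult power_abs)
    also have "\<dots> \<le> \<bar>c j\<bar> * ((1+\<bar>s\<bar>)^(j+2) * 1 * (?A * N j * norm h))"
      by (intro mult_left_mono mult_mono kb) (use b1 N0[of j] in auto)
    also have "\<dots> \<le> \<bar>c j\<bar> * W j \<bar>s\<bar> ?A * norm h"
    proof -
      have P: "1 * (1+\<bar>s\<bar>)^(j+2) * (?A * N j) \<le> W j \<bar>s\<bar> ?A" by (rule Wge) (use N0[of j] in auto)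
      have "\<bar>c j\<bar> * ((1 * (1+\<bar>s\<bar>)^(j+2) * (?A * N j)) * norm h) \<le> \<bar>c j\<bar> * (W j \<bar>s\<bar> ?A * norm h)"
        by (intro mult_left_mono mult_right_mono P) auto
      then show ?thesis by (simp add: ac_simps)
    qed
    finally show "norm (- (c j * s^(p j) * sin (2*pi*(kv j \<bullet> x)) * (2*pi*(kv j \<bullet> h)))) \<le> \<bar>c j\<bar> * W j \<bar>s\<bar> ?A * norm h" .
  qed
qed

lemma Phi_dr:
  "((\<lambda>r. Phi \<theta> (r$i0)) has_derivative
     (\<lambda>h. \<Sum>j. c j * (real (p j) * h$i0 * (r$i0)^(p j - 1)) * cos (2*pi*(kv j \<bullet> \<theta>)))) (at r)"
  unfolding Phi_def
proof (rule series_has_derivative)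
  fix j and r :: "real^'n"
  show "((\<lambda>r. c j * (r$i0)^(p j) * cos (2*pi*(kv j \<bullet> \<theta>))) has_derivative
     (\<lambda>h. c j * (real (p j) * h$i0 * (r$i0)^(p j - 1)) * cos (2*pi*(kv j \<bullet> \<theta>)))) (at r)"
    by (auto intro!: derivative_eq_intros simp: fun_eq_iff algebra_simps)
next
  fix R :: real
  show "\<exists>M. summable M \<and> (\<forall>n x. norm x \<le> R \<longrightarrow>
      norm (c n * (x$i0)^(p n) * cos (2*pi*(kv n \<bullet> \<theta>))) \<le> M n \<and>
      (\<forall>h. norm (c n * (real (p n) * h$i0 * (x$i0)^(p n - 1)) * cos (2*pi*(kv n \<bullet> \<theta>))) \<le> M n * norm h))"
  proof (intro exI conjI allI impI)
    show "summable (\<lambda>j. \<bar>c j\<bar> * W j \<bar>R\<bar> 0)" by (rule Wsum) auto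
  next
    fix j and x :: "real^'n" and h :: "real^'n"
    assume xR: "norm x \<le> R"
    have xi: "\<bar>x$i0\<bar> \<le> \<bar>R\<bar>" using component_le_norm_cart[of x i0] xR by simp
    have b1: "\<bar>x$i0\<bar>^(p j) \<le> (1+\<bar>R\<bar>)^(j+2)" by (rule pow_le'[OF xi])
    have b2: "\<bar>x$i0\<bar>^(p j - 1) \<le> (1+\<bar>R\<bar>)^(j+2)"
    proof -
      have "\<bar>x$i0\<bar>^(p j - 1) \<le> (1+\<bar>R\<bar>)^(p j - 1)" by (rule power_mono) (use xi in auto)
      also have "\<dots> \<le> (1+\<bar>R\<bar>)^(j+2)" by (rule power_increasing) (use pj[of j] in auto)
      finally show ?thesis .
    qed
    have "norm (c j * (x$i0)^(p j) * cos (2*pi*(kv j \<bullet> \<theta>))) = \<bar>c j\<bar> * (1 * \<bar>x$i0\<bar>^(p j) * \<bar>cos (2*pi*(kv j \<bullet> \<theta>))\<bar>)"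
      by (simp add: abs_mult power_abs)
    also have "\<dots> \<le> \<bar>c j\<bar> * W j \<bar>R\<bar> 0"
      by (intro mult_left_mono Wge) (use b1 N0[of j] in auto)
    finally show "norm (c j * (x$i0)^(p j) * cos (2*pi*(kv j \<bullet> \<theta>))) \<le> \<bar>c j\<bar> * W j \<bar>R\<bar> 0" .
    have hi: "\<bar>h$i0\<bar> \<le> norm h" by (rule component_le_norm_cart)
    have "norm (c j * (real (p j) * h$i0 * (x$i0)^(p j - 1)) * cos (2*pi*(kv j \<bullet> \<theta>)))
        = \<bar>c j\<bar> * (real (p j) * \<bar>x$i0\<bar>^(p j - 1) * \<bar>cos (2*pi*(kv j \<bullet> \<theta>))\<bar> * \<bar>h$i0\<bar>)"
      by (simp add: abs_mult power_abs)
    also have "\<dots> \<le> \<bar>c j\<bar> * (real (p j) * (1+\<bar>R\<bar>)^(j+2) * 1 * norm h)"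
      by (intro mult_left_mono mult_mono hi b2) auto
    also have "\<dots> \<le> \<bar>c j\<bar> * W j \<bar>R\<bar> 0 * norm h"
    proof -
      have P: "real (p j) * (1+\<bar>R\<bar>)^(j+2) * 1 \<le> W j \<bar>R\<bar> 0" by (rule Wge) (use pj[of j] in auto)
      have "\<bar>c j\<bar> * ((real (p j) * (1+\<bar>R\<bar>)^(j+2) * 1) * norm h) \<le> \<bar>c j\<bar> * (W j \<bar>R\<bar> 0 * norm h)"
        by (intro mult_left_mono mult_right_mono P) auto
      then show ?thesis by (simp add: ac_simps)
    qed
    finally show "norm (c j * (real (p j) * h$i0 * (x$i0)^(p j - 1)) * cos (2*pi*(kv j \<bullet> \<theta>))) \<le> \<bar>c j\<bar> * W j \<bar>R\<bar> 0 * norm h" .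
  qed
qed

end


lemma series_has_vector_derivative:
  fixes f :: "nat \<Rightarrow> real \<Rightarrow> 'b::banach" and f' :: "nat \<Rightarrow> real \<Rightarrow> 'b"
  assumes df: "\<And>n t. (f n has_vector_derivative f' n t) (at t)"
    and bd: "\<And>R. \<exists>M. summable M \<and> (\<forall>n t. \<bar>t\<bar> \<le> R \<longrightarrow> norm (f n t) \<le> M n \<and> norm (f' n t) \<le> M n)"
  shows "((\<lambda>t. \<Sum>n. f n t) has_vector_derivative (\<Sum>n. f' n t0)) (at t0)"
proof -
  have "((\<lambda>t. \<Sum>n. f n t) has_derivative (\<lambda>h. \<Sum>n. h *\<^sub>R f' n t0)) (at t0)"
  proof (rule series_has_derivative)
    show "(f n has_derivative (\<lambda>h. h *\<^sub>R f' n t)) (at t)" for n t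
      using df[of n t] by (simp add: has_vector_derivative_def)
    show "\<exists>M. summable M \<and> (\<forall>n x. norm x \<le> R \<longrightarrow> norm (f n x) \<le> M n \<and> (\<forall>h. norm (h *\<^sub>R f' n x) \<le> M n * norm h))" for R
    proof -
      obtain M where M: "summable M" "\<And>n t. \<bar>t\<bar> \<le> R \<Longrightarrow> norm (f n t) \<le> M n \<and> norm (f' n t) \<le> M n"
        using bd[of R] by blast
      show ?thesis
      proof (intro exI conjI allI impI)
        show "summable M" by fact
        fix n and x :: real and h :: real assume "norm x \<le> R"
        then have x: "\<bar>x\<bar> \<le> R" by simp
        show "norm (f n x) \<le> M n" using M(2)[OF x] by blast
        have "norm (h *\<^sub>R f' n x) = norm (f' n x) * norm h" by simp
        also have "\<dots> \<le> M n * norm h" using M(2)[OF x] by (intro mult_right_mono) auto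
        finally show "norm (h *\<^sub>R f' n x) \<le> M n * norm h" .
      qed
    qed
  qed
  moreover have "(\<lambda>h. \<Sum>n. h *\<^sub>R f' n t0) = (\<lambda>h. h *\<^sub>R (\<Sum>n. f' n t0))"
  proof -
    obtain M where M: "summable M" "\<And>n t. \<bar>t\<bar> \<le> \<bar>t0\<bar> \<Longrightarrow> norm (f n t) \<le> M n \<and> norm (f' n t) \<le> M n"
      using bd[of "\<bar>t0\<bar>"] by blast
    have sf: "summable (\<lambda>n. f' n t0)"
      by (rule summable_comparison_test[OF _ M(1)]) (use M(2) in auto)
    show ?thesis using suminf_scaleR_right[OF sf] by (simp add: fun_eq_iff)
  qed
  ultimately show ?thesis by (simp add: has_vector_derivative_def)
qed

lemma one_minus_cos_le: "\<bar>1 - cos (x::real)\<bar> \<le> \<bar>x\<bar>"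
proof -
  have "cos x = 1 - 2 * sin (x/2) ^ 2" using cos_double_sin[of "x/2"] by simp
  then have "\<bar>1 - cos x\<bar> = 2 * \<bar>sin (x/2)\<bar> * \<bar>sin (x/2)\<bar>" by (simp add: power2_eq_square abs_mult)
  also have "\<dots> \<le> 2 * \<bar>sin (x/2)\<bar> * 1" by (intro mult_left_mono) (auto simp: abs_sin_le_one)
  also have "\<dots> \<le> 2 * \<bar>x/2\<bar>" using abs_sin_x_le_abs_x[of "x/2"] by simp
  finally show ?thesis by simp
qed

context sysd begin

lemma summ_W:
  fixes X :: "nat \<Rightarrow> 'b::banach"
  assumes "0 \<le> R" "0 \<le> A" "\<And>j. norm (X j) \<le> \<bar>c j\<bar> * W j R A"
  shows "summable X"
  by (rule summable_comparison_test[OF _ Wsum[OF assms(1,2)]]) (use assms(3) in auto)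

lemma H_dr: "((\<lambda>r. H \<theta> r) has_derivative
     (\<lambda>h. \<omega> \<bullet> h + (\<Sum>j. c j * (real (p j) * h$i0 * (r$i0)^(p j - 1)) * cos (2*pi*(kv j \<bullet> \<theta>))))) (at r)"
proof -
  have "((\<lambda>r. \<omega> \<bullet> r) has_derivative (\<lambda>h. \<omega> \<bullet> h)) (at r)" by (intro derivative_eq_intros) auto
  then show ?thesis unfolding H_def by (rule has_derivative_add[OF _ Phi_dr])
qed

lemma H_dtheta: "((\<lambda>\<theta>. H \<theta> r) has_derivative
     (\<lambda>h. \<Sum>j. - (c j * (r$i0)^(p j) * sin (2*pi*(kv j \<bullet> \<theta>)) * (2*pi*(kv j \<bullet> h))))) (at \<theta>)"
  unfolding H_def using has_derivative_add[OF has_derivative_const Phi_dtheta, of "\<omega> \<bullet> r" "r$i0" \<theta>] by simp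

lemma grad_r: "grad (\<lambda>r. H \<theta> r) r = (\<chi> i. \<omega>$i + (if i = i0 then
     (\<Sum>j. c j * real (p j) * (r$i0)^(p j - 1) * cos (2*pi*(kv j \<bullet> \<theta>))) else 0))"
  unfolding grad_eq[OF H_dr] vec_eq_iff
  apply (intro allI)
  subgoal for i
  proof -
    have ax: "\<And>i j. (axis i (1::real)) $ j = (if j = i then 1 else 0)" by (simp add: axis_def)
    show ?thesis by (cases "i = i0") (auto simp: inner_axis ax mult.assoc)
  qed
  done

lemma grad_theta: "grad (\<lambda>\<theta>. H \<theta> r) \<theta> = (\<chi> i.
     \<Sum>j. - (c j * (r$i0)^(p j) * sin (2*pi*(kv j \<bullet> \<theta>)) * (2*pi*real_of_int (k j i))))"
  unfolding grad_eq[OF H_dtheta] by (simp add: inner_axis kv_def)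

end


lemma vec_suminf_nth: "summable (v :: nat \<Rightarrow> real^'m) \<Longrightarrow> (suminf v) $ i = (\<Sum>j. v j $ i)"
  using bounded_linear.suminf[OF bounded_linear_vec_nth, of v i] by simp

context sysd begin


lemma WA: "(2*pi*real CARD('n)) * N j \<le> W j 0 (2*pi*real CARD('n))"
  using Wge[of 0 "2*pi*real CARD('n)" 1 j 1 "(2*pi*real CARD('n)) * N j"] N0[of j] by simp

lemma W0: "real j + 3 \<le> W j 0 0"
  using Wge[of 0 0 "real j + 3" j 1 1] by simp

lemma W0A: "0 \<le> W j 0 (2*pi*real CARD('n))" by (rule order_trans[OF _ WA]) (simp add: N0)

lemma rho_pow: "0 \<le> \<rho> \<Longrightarrow> \<rho> \<le> 1 \<Longrightarrow> \<rho>^n \<le> (1::real)"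
  by (rule power_le_one)

lemma card_ge1: "1 \<le> real CARD('n)" by simp

lemma B_r:
  assumes "0 \<le> \<rho>" "\<rho> \<le> 1"
  shows "norm ((c j * \<rho>^(p j) * ((1 - cos (2*pi*dl j*t)) / dl j)) *\<^sub>R kv j) \<le> \<bar>c j\<bar> * W j 0 (2*pi*real CARD('n)) * \<bar>t\<bar>"
proof -
  have d: "dl j \<noteq> 0" by (rule dl_nz)
  have "norm ((c j * \<rho>^(p j) * ((1 - cos (2*pi*dl j*t)) / dl j)) *\<^sub>R kv j)
      = \<bar>c j\<bar> * \<rho>^(p j) * (\<bar>1 - cos (2*pi*dl j*t)\<bar> / \<bar>dl j\<bar>) * norm (kv j)"
    using assms by (simp add: abs_mult)
  also have "\<dots> \<le> \<bar>c j\<bar> * 1 * (\<bar>2*pi*dl j*t\<bar> / \<bar>dl j\<bar>) * (real CARD('n) * N j)"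
    using assms one_minus_cos_le[of "2*pi*dl j*t"] norm_kv[of j]
    by (intro mult_mono mult_left_mono divide_right_mono rho_pow) auto
  also have "\<dots> = \<bar>c j\<bar> * ((2*pi*real CARD('n)) * N j) * \<bar>t\<bar>" using d by (simp add: abs_mult field_simps)
  also have "\<dots> \<le> \<bar>c j\<bar> * W j 0 (2*pi*real CARD('n)) * \<bar>t\<bar>" using WA[of j] by (intro mult_right_mono mult_left_mono) auto
  finally show ?thesis .
qed

lemma B_r':
  assumes "0 \<le> \<rho>" "\<rho> \<le> 1"
  shows "norm ((c j * \<rho>^(p j) * (2*pi* sin (2*pi*dl j*t))) *\<^sub>R kv j) \<le> \<bar>c j\<bar> * W j 0 (2*pi*real CARD('n))"
proof -
  have "norm ((c j * \<rho>^(p j) * (2*pi* sin (2*pi*dl j*t))) *\<^sub>R kv j)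
      = \<bar>c j\<bar> * \<rho>^(p j) * (2*pi*\<bar>sin (2*pi*dl j*t)\<bar>) * norm (kv j)"
    using assms by (simp add: abs_mult)
  also have "\<dots> \<le> \<bar>c j\<bar> * 1 * (2*pi*1) * (real CARD('n) * N j)"
    using assms abs_sin_le_one[of "2*pi*dl j*t"] norm_kv[of j]
    by (intro mult_mono mult_left_mono rho_pow) auto
  also have "\<dots> = \<bar>c j\<bar> * ((2*pi*real CARD('n)) * N j)" by simp
  also have "\<dots> \<le> \<bar>c j\<bar> * W j 0 (2*pi*real CARD('n))" using WA[of j] by (intro mult_left_mono) auto
  finally show ?thesis .
qed

lemma B_s:
  assumes "0 \<le> \<rho>" "\<rho> \<le> 1"
  shows "norm (c j * \<rho>^(p j) * sin (2*pi*(t * dl j)) * (2*pi*real_of_int (k j i))) \<le> \<bar>c j\<bar> * W j 0 (2*pi*real CARD('n))"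
proof -
  have "norm (c j * \<rho>^(p j) * sin (2*pi*(t * dl j)) * (2*pi*real_of_int (k j i)))
      = \<bar>c j\<bar> * \<rho>^(p j) * \<bar>sin (2*pi*(t * dl j))\<bar> * (2*pi*\<bar>real_of_int (k j i)\<bar>)"
    using assms by (simp add: abs_mult)
  also have "\<dots> \<le> \<bar>c j\<bar> * 1 * 1 * (2*pi*(real CARD('n) * N j))"
    using assms kN[of j i] N0[of j] card_ge1
    by (intro mult_mono mult_left_mono rho_pow) (auto intro: order_trans[OF _ mult_right_mono[OF card_ge1]])
  also have "\<dots> = \<bar>c j\<bar> * ((2*pi*real CARD('n)) * N j)" by simp
  also have "\<dots> \<le> \<bar>c j\<bar> * W j 0 (2*pi*real CARD('n))" using WA[of j] by (intro mult_left_mono) auto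
  finally show ?thesis .
qed

lemma B_a:
  assumes "0 \<le> \<rho>" "\<rho> \<le> 1"
  shows "\<bar>c j * real (p j) * \<rho>^(p j - 1) * (sin (2*pi*dl j*t) / (2*pi*dl j))\<bar> \<le> \<bar>c j\<bar> * W j 0 0 * \<bar>t\<bar>"
proof -
  have d: "dl j \<noteq> 0" by (rule dl_nz)
  have "\<bar>c j * real (p j) * \<rho>^(p j - 1) * (sin (2*pi*dl j*t) / (2*pi*dl j))\<bar>
      = \<bar>c j\<bar> * real (p j) * \<rho>^(p j - 1) * (\<bar>sin (2*pi*dl j*t)\<bar> / \<bar>2*pi*dl j\<bar>)"
    using assms by (simp add: abs_mult)
  also have "\<dots> \<le> \<bar>c j\<bar> * (real j + 3) * 1 * (\<bar>2*pi*dl j*t\<bar> / \<bar>2*pi*dl j\<bar>)"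
    using assms abs_sin_x_le_abs_x[of "2*pi*dl j*t"] pj[of j]
    by (intro mult_mono mult_left_mono divide_right_mono rho_pow) auto
  also have "\<dots> = \<bar>c j\<bar> * (real j + 3) * \<bar>t\<bar>" using d by (simp add: abs_mult)
  also have "\<dots> \<le> \<bar>c j\<bar> * W j 0 0 * \<bar>t\<bar>" using W0[of j] by (intro mult_right_mono mult_left_mono) auto
  finally show ?thesis .
qed

lemma B_a':
  assumes "0 \<le> \<rho>" "\<rho> \<le> 1"
  shows "\<bar>c j * real (p j) * \<rho>^(p j - 1) * cos (2*pi*dl j*t)\<bar> \<le> \<bar>c j\<bar> * W j 0 0"
proof -
  have "\<bar>c j * real (p j) * \<rho>^(p j - 1) * cos (2*pi*dl j*t)\<bar>
      = \<bar>c j\<bar> * real (p j) * \<rho>^(p j - 1) * \<bar>cos (2*pi*dl j*t)\<bar>"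
    using assms by (simp add: abs_mult)
  also have "\<dots> \<le> \<bar>c j\<bar> * (real j + 3) * 1 * 1"
    using assms abs_cos_le_one[of "2*pi*dl j*t"] pj[of j]
    by (intro mult_mono mult_left_mono rho_pow) auto
  also have "\<dots> \<le> \<bar>c j\<bar> * W j 0 0" using W0[of j] by (simp add: mult_left_mono)
  finally show ?thesis .
qed


lemma summ_Wt:
  fixes X :: "nat \<Rightarrow> 'b::banach"
  assumes "0 \<le> A" "\<And>j. norm (X j) \<le> \<bar>c j\<bar> * W j 0 A * T"
  shows "summable X"
  by (rule summable_comparison_test[OF _ summable_mult2[OF Wsum[OF order_refl assms(1)], of T]])
     (use assms(2) in auto)

lemma cW_nonneg: "0 \<le> A \<Longrightarrow> 0 \<le> \<bar>c j\<bar> * W j 0 A"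
proof -
  assume A: "0 \<le> A"
  have "0 \<le> W j 0 A" using Wge[of 0 A 0 j 0 0] N0[of j] A by simp
  then show ?thesis by simp
qed

definition alpha :: "real \<Rightarrow> real \<Rightarrow> real" where
  "alpha \<rho> t = (\<Sum>j. c j * real (p j) * \<rho>^(p j - 1) * (sin (2*pi*dl j*t) / (2*pi*dl j)))"
definition alpha' :: "real \<Rightarrow> real \<Rightarrow> real" where
  "alpha' \<rho> t = (\<Sum>j. c j * real (p j) * \<rho>^(p j - 1) * cos (2*pi*dl j*t))"
definition rser :: "real \<Rightarrow> real \<Rightarrow> real^'n" where
  "rser \<rho> t = (\<Sum>j. (c j * \<rho>^(p j) * ((1 - cos (2*pi*dl j*t)) / dl j)) *\<^sub>R kv j)"
definition rser' :: "real \<Rightarrow> real \<Rightarrow> real^'n" where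
  "rser' \<rho> t = (\<Sum>j. (c j * \<rho>^(p j) * (2*pi * sin (2*pi*dl j*t))) *\<^sub>R kv j)"
definition th :: "real \<Rightarrow> real \<Rightarrow> real^'n" where
  "th \<rho> t = t *\<^sub>R \<omega> + alpha \<rho> t *\<^sub>R axis i0 1"
definition rr :: "real \<Rightarrow> real \<Rightarrow> real^'n" where
  "rr \<rho> t = \<rho> *\<^sub>R axis i0 1 + rser \<rho> t"
definition gam :: "real \<Rightarrow> real \<Rightarrow> (real^'n) \<times> (real^'n)" where
  "gam \<rho> t = (th \<rho> t, rr \<rho> t)"

lemma alpha_deriv:
  assumes "0 \<le> \<rho>" "\<rho> \<le> 1"
  shows "(alpha \<rho> has_vector_derivative alpha' \<rho> t) (at t)"
  unfolding alpha_def alpha'_def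
  apply (rule series_has_vector_derivative)
  subgoal for j t
  proof -
    have "((\<lambda>t. sin (2*pi*dl j*t) / (2*pi*dl j)) has_real_derivative cos (2*pi*dl j*t)) (at t)"
      using dl_nz[of j] by (auto intro!: derivative_eq_intros simp: field_simps)
    then show ?thesis
      unfolding has_real_derivative_iff_has_vector_derivative[symmetric] by (rule DERIV_cmult)
  qed
  subgoal for R
    apply (rule exI[of _ "\<lambda>n. \<bar>c n\<bar> * W n 0 0 * (1 + \<bar>R\<bar>)"])
    apply (intro conjI allI impI)
    subgoal by (rule summable_mult2[OF Wsum]) auto
    subgoal premises prems for n t
    proof -
      have t1: "\<bar>t\<bar> \<le> 1 + \<bar>R\<bar>" using prems by linarith
      show ?thesis
        by (rule order_trans[OF _ mult_left_mono[OF t1 cW_nonneg]]) (use B_a[OF assms, of n t] in simp_all)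
    qed
    subgoal for n t
    proof -
      have "\<bar>c n\<bar> * W n 0 0 * 1 \<le> \<bar>c n\<bar> * W n 0 0 * (1 + \<bar>R\<bar>)"
        by (rule mult_left_mono) (simp_all add: cW_nonneg)
      then show ?thesis using B_a'[OF assms, of n t] by simp
    qed
    done
  done

lemma rser_deriv:
  assumes "0 \<le> \<rho>" "\<rho> \<le> 1"
  shows "(rser \<rho> has_vector_derivative rser' \<rho> t) (at t)"
  unfolding rser_def rser'_def
  apply (rule series_has_vector_derivative)
  subgoal for j t
  proof -
    have "((\<lambda>t. c j * \<rho>^(p j) * ((1 - cos (2*pi*dl j*t)) / dl j)) has_real_derivative
            c j * \<rho>^(p j) * (2*pi * sin (2*pi*dl j*t))) (at t)"
      using dl_nz[of j] by (auto intro!: derivative_eq_intros simp: field_simps)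
    from has_vector_derivative_scaleR[OF this has_vector_derivative_const[of "kv j"]]
    show ?thesis by simp
  qed
  subgoal for R
    apply (rule exI[of _ "\<lambda>n. \<bar>c n\<bar> * W n 0 (2*pi*real CARD('n)) * (1 + \<bar>R\<bar>)"])
    apply (intro conjI allI impI)
    subgoal by (rule summable_mult2[OF Wsum]) auto
    subgoal premises prems for n t
    proof -
      have t1: "\<bar>t\<bar> \<le> 1 + \<bar>R\<bar>" using prems by linarith
      show ?thesis
        by (rule order_trans[OF _ mult_left_mono[OF t1 cW_nonneg]]) (use B_r[OF assms, of n t] in simp_all)
    qed
    subgoal for n t
    proof -
      have "\<bar>c n\<bar> * W n 0 (2*pi*real CARD('n)) * 1 \<le> \<bar>c n\<bar> * W n 0 (2*pi*real CARD('n)) * (1 + \<bar>R\<bar>)"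
        by (rule mult_left_mono) (simp_all add: cW_nonneg)
      then show ?thesis using B_r'[OF assms, of n t] by simp
    qed
    done
  done

lemma th_deriv:
  assumes "0 \<le> \<rho>" "\<rho> \<le> 1"
  shows "(th \<rho> has_vector_derivative (\<omega> + alpha' \<rho> t *\<^sub>R axis i0 1)) (at t)"
proof -
  have a: "(alpha \<rho> has_real_derivative alpha' \<rho> t) (at t)"
    using alpha_deriv[OF assms] by (simp add: has_real_derivative_iff_has_vector_derivative)
  have b: "((\<lambda>t. t) has_real_derivative 1) (at t)" by simp
  show ?thesis unfolding th_def
    using has_vector_derivative_add[OF has_vector_derivative_scaleR[OF b has_vector_derivative_const[of \<omega>]]
        has_vector_derivative_scaleR[OF a has_vector_derivative_const[of "axis i0 1"]]]
    by simp
qed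

lemma rr_deriv:
  assumes "0 \<le> \<rho>" "\<rho> \<le> 1"
  shows "(rr \<rho> has_vector_derivative rser' \<rho> t) (at t)"
  unfolding rr_def
  using has_vector_derivative_add[OF has_vector_derivative_const rser_deriv[OF assms]] by simp

lemma rser_summ:
  assumes "0 \<le> \<rho>" "\<rho> \<le> 1"
  shows "summable (\<lambda>j. (c j * \<rho>^(p j) * ((1 - cos (2*pi*dl j*t)) / dl j)) *\<^sub>R kv j)"
  by (rule summ_Wt[of "2*pi*real CARD('n)" _ "\<bar>t\<bar>"]) (use B_r[OF assms] in auto)

lemma rser'_summ:
  assumes "0 \<le> \<rho>" "\<rho> \<le> 1"
  shows "summable (\<lambda>j. (c j * \<rho>^(p j) * (2*pi * sin (2*pi*dl j*t))) *\<^sub>R kv j)"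
  by (rule summ_Wt[of "2*pi*real CARD('n)" _ 1]) (use B_r'[OF assms] in auto)

lemma rr_i0:
  assumes "0 \<le> \<rho>" "\<rho> \<le> 1"
  shows "rr \<rho> t $ i0 = \<rho>"
  unfolding rr_def rser_def using vec_suminf_nth[OF rser_summ[OF assms, of t], of i0]
  by (simp add: kv_nth_i0)

lemma kv_th: "kv j \<bullet> th \<rho> t = t * dl j"
  unfolding th_def by (simp add: inner_add_right kv_i0 dl_def)

lemma gam_deriv:
  assumes "0 \<le> \<rho>" "\<rho> \<le> 1"
  shows "(gam \<rho> has_vector_derivative ham_vf H (gam \<rho> t)) (at t)"
proof -
  have g1: "grad (\<lambda>r. H (th \<rho> t) r) (rr \<rho> t) = \<omega> + alpha' \<rho> t *\<^sub>R axis i0 1"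
    unfolding grad_r vec_eq_iff
  proof
    fix i
    have ax: "\<And>i j. (axis i (1::real)) $ j = (if j = i then 1 else 0)" by (simp add: axis_def)
    show "(\<chi> i. \<omega> $ i + (if i = i0 then \<Sum>j. c j * real (p j) * rr \<rho> t $ i0 ^ (p j - 1) * cos (2 * pi * (kv j \<bullet> th \<rho> t)) else 0)) $ i =
         (\<omega> + alpha' \<rho> t *\<^sub>R axis i0 1) $ i"
      by (cases "i = i0") (simp_all add: ax rr_i0[OF assms] kv_th alpha'_def mult_ac)
  qed
  have g2: "- grad (\<lambda>\<theta>. H \<theta> (rr \<rho> t)) (th \<rho> t) = rser' \<rho> t"
    unfolding grad_theta vec_eq_iff
  proof
    fix i
    have s: "summable (\<lambda>j. c j * \<rho>^(p j) * sin (2*pi*(t * dl j)) * (2*pi*real_of_int (k j i)))"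
      by (rule summ_Wt[of "2*pi*real CARD('n)" _ 1]) (use B_s[OF assms] in auto)
    have "(- (\<chi> i. \<Sum>j. - (c j * rr \<rho> t $ i0 ^ p j * sin (2 * pi * (kv j \<bullet> th \<rho> t)) * (2 * pi * real_of_int (k j i))))) $ i
        = (\<Sum>j. c j * \<rho>^(p j) * sin (2*pi*(t * dl j)) * (2*pi*real_of_int (k j i)))"
      using suminf_minus[OF s] by (simp add: rr_i0[OF assms] kv_th)
    also have "\<dots> = (\<Sum>j. ((c j * \<rho>^(p j) * (2*pi * sin (2*pi*dl j*t))) *\<^sub>R kv j) $ i)"
      by (simp add: kv_def mult_ac)
    also have "\<dots> = rser' \<rho> t $ i"
      unfolding rser'_def by (rule vec_suminf_nth[OF rser'_summ[OF assms], symmetric])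
    finally show "(- (\<chi> i. \<Sum>j. - (c j * rr \<rho> t $ i0 ^ p j * sin (2 * pi * (kv j \<bullet> th \<rho> t)) * (2 * pi * real_of_int (k j i))))) $ i = rser' \<rho> t $ i" .
  qed
  show ?thesis
    unfolding gam_def ham_vf_def fst_conv snd_conv g1 g2
    by (rule has_vector_derivative_Pair[OF th_deriv[OF assms] rr_deriv[OF assms]])
qed

end


context sysd begin

lemma m_ne: "m \<noteq> i0" using km k_i0 by metis

lemma rr_0: "rr \<rho> 0 = \<rho> *\<^sub>R axis i0 1" unfolding rr_def rser_def by simp

lemma gam_cont: "0 \<le> \<rho> \<Longrightarrow> \<rho> \<le> 1 \<Longrightarrow> continuous_on S (\<lambda>t. norm (snd (gam \<rho> t)))"
  apply (intro continuous_at_imp_continuous_on ballI continuous_intros)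
  using has_vector_derivative_continuous[OF gam_deriv] by (auto intro: continuous_intros)

lemma term_nonneg:
  assumes "0 \<le> \<rho>"
  shows "0 \<le> ((c j * \<rho>^(p j) * ((1 - cos (2*pi*dl j*t)) / dl j)) *\<^sub>R kv j) $ m"
proof -
  have s: "0 \<le> c j * real_of_int (k j m) / dl j" using sgn[of j] by (simp add: dl_def kv_def)
  have "((c j * \<rho>^(p j) * ((1 - cos (2*pi*dl j*t)) / dl j)) *\<^sub>R kv j) $ m
     = \<rho>^(p j) * (1 - cos (2*pi*dl j*t)) * (c j * real_of_int (k j m) / dl j)"
    by (simp add: kv_def)
  also have "0 \<le> \<dots>" using s assms by (intro mult_nonneg_nonneg) auto
  finally show ?thesis .
qed

lemma escape:
  assumes r0: "0 < \<rho>" "\<rho> < 1" and cond: "\<bar>dl j\<bar> \<le> 2 * \<rho>^(p j + 1) * \<bar>c j\<bar>"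
  shows "\<exists>t. t \<in> escape_times H \<rho> \<and> t \<le> 1 / (2 * \<bar>dl j\<bar>)"
proof -
  have r01: "0 \<le> \<rho>" "\<rho> \<le> 1" using r0 by auto
  define T where "T = 1 / (2 * \<bar>dl j\<bar>)"
  have d: "dl j \<noteq> 0" by (rule dl_nz)
  have T0: "0 < T" using d unfolding T_def by simp
  define f where "f t = norm (snd (gam \<rho> t))" for t
  have f0: "f 0 = \<rho>" unfolding f_def gam_def by (simp add: rr_0 r01)
  have cosT: "cos (2*pi*dl j*T) = -1"
  proof (cases "dl j > 0")
    case True then have e: "2*pi*dl j*T = pi" unfolding T_def by simp
    show ?thesis unfolding e by simp
  next
    case False then have e: "2*pi*dl j*T = - pi" using d unfolding T_def by simp
    show ?thesis unfolding e by simp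
  qed
  have ssum: "summable (\<lambda>i. ((c i * \<rho>^(p i) * ((1 - cos (2*pi*dl i*T)) / dl i)) *\<^sub>R kv i) $ m)"
    using bounded_linear.summable[OF bounded_linear_vec_nth rser_summ[OF r01, of T]] .
  have "1 / \<rho> \<le> 2 * \<rho>^(p j) * \<bar>c j\<bar> / \<bar>dl j\<bar>"
    using cond d r0 by (simp add: field_simps)
  also have "\<dots> \<le> \<rho>^(p j) * (1 - cos (2*pi*dl j*T)) * (\<bar>c j\<bar> * \<bar>real_of_int (k j m)\<bar> / \<bar>dl j\<bar>)"
  proof -
    have "1 \<le> \<bar>real_of_int (k j m)\<bar>" using km[of j] by linarith
    then have "\<bar>c j\<bar> / \<bar>dl j\<bar> \<le> \<bar>c j\<bar> * \<bar>real_of_int (k j m)\<bar> / \<bar>dl j\<bar>"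
      by (intro divide_right_mono) (auto intro: mult_le_cancel_left1[THEN iffD2])
    then have "2 * \<rho>^(p j) * (\<bar>c j\<bar> / \<bar>dl j\<bar>) \<le> 2 * \<rho>^(p j) * (\<bar>c j\<bar> * \<bar>real_of_int (k j m)\<bar> / \<bar>dl j\<bar>)"
      by (rule mult_left_mono) (simp add: r01)
    then show ?thesis unfolding cosT by (simp add: mult_ac)
  qed
  also have "\<dots> = ((c j * \<rho>^(p j) * ((1 - cos (2*pi*dl j*T)) / dl j)) *\<^sub>R kv j) $ m"
  proof -
    have s: "0 \<le> c j * real_of_int (k j m) / dl j" using sgn[of j] by (simp add: dl_def kv_def)
    then have "\<bar>c j\<bar> * \<bar>real_of_int (k j m)\<bar> / \<bar>dl j\<bar> = c j * real_of_int (k j m) / dl j"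
      by (metis abs_divide abs_mult abs_of_nonneg)
    then show ?thesis by (simp add: kv_def)
  qed
  also have "\<dots> = (\<Sum>i\<in>{j}. ((c i * \<rho>^(p i) * ((1 - cos (2*pi*dl i*T)) / dl i)) *\<^sub>R kv i) $ m)" by simp
  also have "\<dots> \<le> (\<Sum>i. ((c i * \<rho>^(p i) * ((1 - cos (2*pi*dl i*T)) / dl i)) *\<^sub>R kv i) $ m)"
    by (rule sum_le_suminf[OF ssum]) (use term_nonneg r01 in auto)
  also have "\<dots> = rr \<rho> T $ m"
    unfolding rr_def rser_def using vec_suminf_nth[OF rser_summ[OF r01, of T], of m] m_ne
    by (simp add: axis_def)
  also have "\<dots> \<le> f T" unfolding f_def gam_def using component_le_norm_cart[of "rr \<rho> T" m] by simp
  finally have fT: "1 / \<rho> \<le> f T" .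
  have rho_le: "\<rho> \<le> 1 / \<rho>" using r0 by (simp add: field_simps) (smt (verit) mult_less_cancel_left1)
  obtain t where t: "0 \<le> t" "t \<le> T" "f t = 1 / \<rho>"
    using IVT'[of f 0 "1/\<rho>" T] f0 fT rho_le T0 gam_cont[OF r01] unfolding f_def by force
  have tpos: "0 < t"
  proof (rule ccontr)
    assume "\<not> 0 < t" then have "t = 0" using t by simp
    then have "\<rho> = 1 / \<rho>" using t f0 by simp
    then show False using r0 by (simp add: field_simps) (smt (verit) mult_less_cancel_left1)
  qed
  have "t \<in> escape_times H \<rho>"
    unfolding escape_times_def
  proof (intro CollectI conjI exI)
    show "0 < t" by fact
    show "norm (rr \<rho> 0) \<le> \<rho>" using r01 by (simp add: rr_0)
    show "gam \<rho> 0 = (th \<rho> 0, rr \<rho> 0)" by (simp add: gam_def)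
    show "\<forall>s\<in>{0..t}. (gam \<rho> has_vector_derivative ham_vf H (gam \<rho> s)) (at s within {0..t})"
      using gam_deriv[OF r01] by (auto intro: has_vector_derivative_at_within)
    show "norm (snd (gam \<rho> t)) = 1 / \<rho>" using t f_def by simp
  qed
  then show ?thesis using t unfolding T_def by blast
qed

lemma T_le: "t \<in> escape_times H \<rho> \<Longrightarrow> T_time H \<rho> \<le> t"
  unfolding T_time_def
  by (rule cInf_lower) (auto simp: escape_times_def bdd_below_def intro!: exI[of _ 0])

end


context sysd begin

lemma sum_c: "summable (\<lambda>j. \<bar>c j\<bar>)"
proof (rule summ_Wt[of 0 _ 1])
  fix j
  have "1 \<le> W j 0 0" using Wge[of 0 0 1 j 1 1] by simp
  then have "\<bar>c j\<bar> * 1 \<le> \<bar>c j\<bar> * W j 0 0" by (intro mult_left_mono) auto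
  then show "norm \<bar>c j\<bar> \<le> \<bar>c j\<bar> * W j 0 0 * 1" by simp
qed simp

lemma Phi_term_bound: "norm (c j * s^(p j) * cos (2*pi*(kv j \<bullet> \<theta>))) \<le> \<bar>c j\<bar> * W j \<bar>s\<bar> 0"
proof -
  have "norm (c j * s^(p j) * cos (2*pi*(kv j \<bullet> \<theta>))) = \<bar>c j\<bar> * (1 * \<bar>s\<bar>^(p j) * \<bar>cos (2*pi*(kv j \<bullet> \<theta>))\<bar>)"
    by (simp add: abs_mult power_abs)
  also have "\<dots> \<le> \<bar>c j\<bar> * W j \<bar>s\<bar> 0"
    by (intro mult_left_mono Wge) (use pow_le[of s j] in auto)
  finally show ?thesis .
qed

lemma Phi_summable: "summable (\<lambda>j. c j * s^(p j) * cos (2*pi*(kv j \<bullet> \<theta>)))"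
  by (rule summ_W[of "\<bar>s\<bar>" 0]) (use Phi_term_bound in auto)

lemma tail_bound:
  assumes s1: "\<bar>s\<bar> \<le> 1" and pK: "\<And>j. j \<notin> F \<Longrightarrow> K + 1 \<le> p j"
  shows "\<bar>\<Sum>j. (if j \<in> F then 0 else c j * s^(p j) * cos (2*pi*(kv j \<bullet> \<theta>)))\<bar> \<le> (\<Sum>j. \<bar>c j\<bar>) * \<bar>s\<bar>^(K+1)"
proof -
  let ?f = "\<lambda>j. (if j \<in> F then 0 else c j * s^(p j) * cos (2*pi*(kv j \<bullet> \<theta>)))"
  have b: "norm (?f j) \<le> \<bar>c j\<bar> * \<bar>s\<bar>^(K+1)" for j
  proof (cases "j \<in> F")
    case False
    have "norm (?f j) = \<bar>c j\<bar> * (\<bar>s\<bar>^(p j) * \<bar>cos (2*pi*(kv j \<bullet> \<theta>))\<bar>)" using False by (simp add: abs_mult power_abs)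
    also have "\<dots> \<le> \<bar>c j\<bar> * (\<bar>s\<bar>^(K+1) * 1)"
      by (intro mult_left_mono mult_mono power_decreasing pK False) (use s1 in auto)
    finally show ?thesis by simp
  qed simp
  have sb: "summable (\<lambda>j. \<bar>c j\<bar> * \<bar>s\<bar>^(K+1))" by (rule summable_mult2[OF sum_c])
  have sn: "summable (\<lambda>j. norm (?f j))" by (rule summable_comparison_test[OF _ sb]) (use b in auto)
  have "\<bar>suminf ?f\<bar> \<le> (\<Sum>j. norm (?f j))" using summable_norm[OF sn] by simp
  also have "\<dots> \<le> (\<Sum>j. \<bar>c j\<bar> * \<bar>s\<bar>^(K+1))" by (rule suminf_le[OF b sn sb])
  also have "\<dots> = (\<Sum>j. \<bar>c j\<bar>) * \<bar>s\<bar>^(K+1)" by (rule suminf_mult2[OF sum_c, symmetric])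
  finally show ?thesis .
qed

lemma ham_form_H: "ham_form H \<omega>"
  unfolding ham_form_def
proof (intro exI conjI allI impI)
  show "(0::real) < 1" by simp
  fix \<theta> r :: "real^'n" assume r1: "norm r < 1"
  have s: "\<bar>r$i0\<bar> \<le> norm r" by (rule component_le_norm_cart)
  have "\<bar>H \<theta> r - \<omega> \<bullet> r\<bar> = \<bar>Phi \<theta> (r$i0)\<bar>" by (simp add: H_def)
  also have "\<dots> = \<bar>\<Sum>j. (if j \<in> {} then 0 else c j * (r$i0)^(p j) * cos (2*pi*(kv j \<bullet> \<theta>)))\<bar>"
    by (simp add: Phi_def)
  also have "\<dots> \<le> (\<Sum>j. \<bar>c j\<bar>) * \<bar>r$i0\<bar>^(1+1)"
    by (rule tail_bound) (use s r1 p2 in \<open>auto simp: numeral_2_eq_2\<close>)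
  also have "\<dots> \<le> (\<Sum>j. \<bar>c j\<bar>) * norm r ^ 2"
  proof -
    have "\<bar>r$i0\<bar>^2 \<le> norm r ^ 2" by (rule power_mono[OF s]) simp
    moreover have "0 \<le> (\<Sum>j. \<bar>c j\<bar>)" by (rule suminf_nonneg[OF sum_c]) simp
    ultimately show ?thesis by (simp add: mult_left_mono numeral_2_eq_2 del: power2_abs)
  qed
  finally show "\<bar>H \<theta> r - \<omega> \<bullet> r\<bar> \<le> (\<Sum>j. \<bar>c j\<bar>) * norm r ^ 2" .
qed

lemma kv_shift: "kv j \<bullet> (\<theta> + axis i 1) = kv j \<bullet> \<theta> + real_of_int (k j i)"
  by (simp add: inner_add_right inner_axis kv_def)

lemma cos_shift: "cos (2*pi*(x + real_of_int n)) = cos (2*pi*x)"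
  by (simp add: distrib_left cos_add)

lemma sin_shift: "sin (2*pi*(x + real_of_int n)) = sin (2*pi*x)"
  by (simp add: distrib_left sin_add)

lemma H_periodic: "H (\<theta> + axis i 1) r = H \<theta> r"
  by (simp add: H_def Phi_def kv_shift cos_shift)

end


lemma norm_csin_le: "norm (sin (z::complex)) \<le> exp (norm z)"
proof -
  have "norm (sin z) = norm (exp(\<i> * z) - exp(-(\<i> * z))) / 2"
    by (simp add: sin_exp_eq norm_divide norm_mult)
  also have "\<dots> \<le> (norm (exp(\<i> * z)) + norm (exp(-(\<i> * z)))) / 2"
    by (intro divide_right_mono norm_triangle_ineq4) simp
  also have "\<dots> \<le> (exp (norm z) + exp (norm z)) / 2"
    using norm_exp[of "\<i> * z"] norm_exp[of "-(\<i> * z)"] by (intro divide_right_mono add_mono) (auto simp: norm_mult)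
  finally show ?thesis by simp
qed

lemma cos_shift_c: "cos (of_real (2*pi) * (x + of_int n)) = cos (of_real (2*pi) * (x::complex))"
proof -
  have e: "of_real (2*pi) * of_int n = (of_real (2*pi * of_int n) :: complex)" by simp
  have "cos (of_real (2*pi) * of_int n :: complex) = 1" "sin (of_real (2*pi) * of_int n :: complex) = 0"
    unfolding e cos_of_real sin_of_real by simp_all
  then show ?thesis by (simp add: distrib_left cos_add)
qed

context sysd begin

definition ck :: "nat \<Rightarrow> complex^'n \<Rightarrow> complex" where
  "ck j z = (\<Sum>i\<in>UNIV. of_int (k j i) * z$i)"

definition cterm :: "nat \<Rightarrow> (complex^'n) \<times> (complex^'n) \<Rightarrow> complex" where
  "cterm j zw = of_real (c j) * ((snd zw)$i0)^(p j) * cos (of_real (2*pi) * ck j (fst zw))"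

definition cterm' :: "nat \<Rightarrow> (complex^'n) \<times> (complex^'n) \<Rightarrow> (complex^'n) \<times> (complex^'n) \<Rightarrow> complex" where
  "cterm' j zw uv = of_real (c j) * (of_nat (p j) * (snd uv)$i0 * ((snd zw)$i0)^(p j - 1)) * cos (of_real (2*pi) * ck j (fst zw))
     + of_real (c j) * ((snd zw)$i0)^(p j) * (- sin (of_real (2*pi) * ck j (fst zw)) * (of_real (2*pi) * ck j (fst uv)))"

definition FF :: "(complex^'n) \<times> (complex^'n) \<Rightarrow> complex" where
  "FF zw = (\<Sum>i\<in>UNIV. of_real (\<omega>$i) * (snd zw)$i) + (\<Sum>j. cterm j zw)"

definition LL :: "(complex^'n) \<times> (complex^'n) \<Rightarrow> (complex^'n) \<times> (complex^'n) \<Rightarrow> complex" where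
  "LL zw uv = (\<Sum>i\<in>UNIV. of_real (\<omega>$i) * (snd uv)$i) + (\<Sum>j. cterm' j zw uv)"

lemma ck_bound: "norm (ck j z) \<le> real CARD('n) * N j * norm z"
proof -
  have "norm (ck j z) \<le> (\<Sum>i\<in>UNIV. norm (of_int (k j i) * z$i :: complex))" unfolding ck_def by (rule norm_sum)
  also have "\<dots> \<le> (\<Sum>i\<in>(UNIV::'n set). N j * norm z)"
  proof (rule sum_mono)
    fix i
    have "norm (of_int (k j i) * z$i :: complex) = \<bar>real_of_int (k j i)\<bar> * norm (z$i)" by (simp add: norm_mult)
    also have "\<dots> \<le> N j * norm z" by (intro mult_mono kN Finite_Cartesian_Product.norm_nth_le) (auto simp: N0)
    finally show "norm (of_int (k j i) * z$i :: complex) \<le> N j * norm z" .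
  qed
  also have "\<dots> = real CARD('n) * N j * norm z" by simp
  finally show ?thesis .
qed

lemma ck_lin1: "ck j (a *s u) = a * ck j u"
  unfolding ck_def by (simp add: sum_distrib_left mult_ac)

lemma ck_lin2: "ck j (z + axis i 1) = ck j z + of_int (k j i)"
proof -
  have "\<And>m. of_int (k j m) * (z + axis i 1)$m = of_int (k j m) * z$m + (if m = i then of_int (k j i) else 0)"
    by (simp add: axis_def distrib_left)
  then show ?thesis unfolding ck_def by (simp add: sum.distrib)
qed

lemma cterm_deriv: "(cterm j has_derivative cterm' j zw) (at zw)"
proof -
  have d_ck: "((\<lambda>zw. of_real (2*pi) * ck j (fst zw)) has_derivative (\<lambda>uv. of_real (2*pi) * ck j (fst uv))) (at zw)"
    unfolding ck_def by (intro derivative_eq_intros) auto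
  have d_cos: "((\<lambda>zw. cos (of_real (2*pi) * ck j (fst zw))) has_derivative
      (\<lambda>uv. - sin (of_real (2*pi) * ck j (fst zw)) * (of_real (2*pi) * ck j (fst uv)))) (at zw)"
    by (rule has_derivative_ccos[OF d_ck])
  have d_nth: "((\<lambda>zw::(complex^'n)\<times>(complex^'n). (snd zw)$i0) has_derivative (\<lambda>uv. (snd uv)$i0)) (at zw)"
    by (intro derivative_eq_intros) auto
  have d_pow: "((\<lambda>zw. ((snd zw)$i0)^(p j)) has_derivative (\<lambda>uv. of_nat (p j) * (snd uv)$i0 * ((snd zw)$i0)^(p j - 1))) (at zw)"
    by (rule has_derivative_power[OF d_nth])
  have d_c: "((\<lambda>zw::(complex^'n)\<times>(complex^'n). of_real (c j) :: complex) has_derivative (\<lambda>uv. 0)) (at zw)"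
    by simp
  show ?thesis unfolding cterm_def
    by (rule has_derivative_eq_rhs[OF has_derivative_mult[OF has_derivative_mult[OF d_c d_pow] d_cos]])
       (simp add: fun_eq_iff cterm'_def algebra_simps)
qed

lemma Wexp:
  assumes "0 \<le> R" "0 \<le> A" "0 \<le> b" "b \<le> (1+R)^(j+2)" "0 \<le> e" "e \<le> exp (A * N j * R)"
    "0 \<le> X" "X \<le> (real j + 3) * (1 + A * N j)"
  shows "b * e * X \<le> W j R A"
proof -
  have "b * e * X \<le> (1+R)^(j+2) * exp (A * N j * R) * ((real j + 3) * (1 + A * N j))"
    using assms by (intro mult_mono) auto
  also have "\<dots> = W j R A" unfolding W_def by (simp add: mult_ac)
  finally show ?thesis .
qed

lemma cterm_bounds:
  assumes zw: "norm zw \<le> R"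
  shows "norm (cterm j zw) \<le> \<bar>c j\<bar> * W j R (2*pi*real CARD('n))"
    and "norm (cterm' j zw uv) \<le> \<bar>c j\<bar> * W j R (2*pi*real CARD('n)) * norm uv"
proof -
  let ?A = "2*pi*real CARD('n)"
  obtain z w where zw_def: "zw = (z, w)" by fastforce
  obtain u v where uv_def: "uv = (u, v)" by fastforce
  have R0: "0 \<le> R" using zw norm_ge_zero order_trans by blast
  have wR: "norm (w$i0) \<le> R" using Finite_Cartesian_Product.norm_nth_le[of w i0] norm_snd_le[of w z] zw unfolding zw_def by simp
  have zR: "norm z \<le> R" using norm_fst_le[of z w] zw unfolding zw_def by simp
  have vh: "norm (v$i0) \<le> norm uv" using Finite_Cartesian_Product.norm_nth_le[of v i0] norm_snd_le[of v u] unfolding uv_def by simp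
  have uh: "norm u \<le> norm uv" using norm_fst_le[of u v] unfolding uv_def by simp
  have AN: "0 \<le> ?A * N j" using N0[of j] by simp
  have one_le0: "1 * 1 \<le> (real j + 3) * (1 + ?A * N j)" by (intro mult_mono) (use AN in auto)
  then have one_le: "1 \<le> (real j + 3) * (1 + ?A * N j)" by simp
  have Zb: "norm (of_real (2*pi) * ck j z :: complex) \<le> ?A * N j * R"
  proof -
    have "norm (of_real (2*pi) * ck j z :: complex) = 2*pi * norm (ck j z)" by (simp add: norm_mult)
    also have "\<dots> \<le> 2*pi * (real CARD('n) * N j * R)"
    proof -
      have "real CARD('n) * N j * norm z \<le> real CARD('n) * N j * R" by (rule mult_left_mono[OF zR]) (simp add: N0)
      from order_trans[OF ck_bound[of j z] this] show ?thesis by (intro mult_left_mono) auto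
    qed
    finally show ?thesis by (simp add: mult_ac)
  qed
  have ecos: "norm (cos (of_real (2*pi) * ck j z :: complex)) \<le> exp (?A * N j * R)"
    using norm_cos_le[of "of_real (2*pi) * ck j z"] Zb by (meson exp_le_cancel_iff order_trans)
  have esin: "norm (sin (of_real (2*pi) * ck j z :: complex)) \<le> exp (?A * N j * R)"
    using norm_csin_le[of "of_real (2*pi) * ck j z"] Zb by (meson exp_le_cancel_iff order_trans)
  have pw: "norm (w$i0)^(p j) \<le> (1+R)^(j+2)" using pow_le'[of "norm (w$i0)" R j] wR by simp
  have pw1: "norm (w$i0)^(p j - 1) \<le> (1+R)^(j+2)"
  proof -
    have "norm (w$i0)^(p j - 1) \<le> (1+R)^(p j - 1)" by (rule power_mono) (use wR in auto)
    also have "\<dots> \<le> (1+R)^(j+2)" by (rule power_increasing) (use pj[of j] R0 in auto)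
    finally show ?thesis .
  qed
  have "norm (cterm j zw) = \<bar>c j\<bar> * (norm (w$i0)^(p j) * norm (cos (of_real (2*pi) * ck j z)) * 1)"
    unfolding cterm_def zw_def by (simp add: norm_mult norm_power)
  also have "\<dots> \<le> \<bar>c j\<bar> * W j R ?A"
    by (intro mult_left_mono Wexp) (use R0 pw ecos AN one_le in auto)
  finally show "norm (cterm j zw) \<le> \<bar>c j\<bar> * W j R ?A" .
  have ckub: "norm (ck j u) \<le> real CARD('n) * N j * norm uv"
  proof -
    have "real CARD('n) * N j * norm u \<le> real CARD('n) * N j * norm uv" by (rule mult_left_mono[OF uh]) (simp add: N0)
    from order_trans[OF ck_bound[of j u] this] show ?thesis .
  qed
  have "norm (cterm' j zw uv) \<le> \<bar>c j\<bar> * (real (p j) * norm (v$i0) * norm (w$i0)^(p j - 1)) * norm (cos (of_real (2*pi) * ck j z))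
      + \<bar>c j\<bar> * norm (w$i0)^(p j) * (norm (sin (of_real (2*pi) * ck j z)) * (2*pi * norm (ck j u)))"
    unfolding cterm'_def zw_def uv_def
    by (rule order_trans[OF norm_triangle_ineq]) (simp add: norm_mult norm_power)
  also have "\<dots> \<le> \<bar>c j\<bar> * (real (p j) * norm uv * (1+R)^(j+2)) * exp (?A * N j * R)
      + \<bar>c j\<bar> * (1+R)^(j+2) * (exp (?A * N j * R) * (2*pi * (real CARD('n) * N j * norm uv)))"
    apply (intro add_mono mult_mono mult_left_mono vh pw pw1 ecos esin ckub)
    apply (simp_all add: N0)
    using R0 by (auto intro!: mult_nonneg_nonneg)
  also have "\<dots> = \<bar>c j\<bar> * ((1+R)^(j+2) * exp (?A * N j * R) * (real (p j) + ?A * N j)) * norm uv"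
    by (simp add: algebra_simps)
  also have "\<dots> \<le> \<bar>c j\<bar> * W j R ?A * norm uv"
  proof -
    have "real (p j) + ?A * N j \<le> (real j + 3) * (1 + ?A * N j)"
    proof -
      have a: "1 * (?A * N j) \<le> (real j + 3) * (?A * N j)" by (rule mult_right_mono[OF _ AN]) simp
      have b: "real (p j) \<le> real j + 3" using pj[of j] by simp
      have "real (p j) + ?A * N j \<le> (real j + 3) + (real j + 3) * (?A * N j)" using add_mono[OF b a] by simp
      then show ?thesis by (simp add: distrib_left)
    qed
    then have "(1+R)^(j+2) * exp (?A * N j * R) * (real (p j) + ?A * N j) \<le> W j R ?A"
      by (intro Wexp) (use R0 AN in auto)
    then show ?thesis by (intro mult_right_mono mult_left_mono) auto
  qed
  finally show "norm (cterm' j zw uv) \<le> \<bar>c j\<bar> * W j R ?A * norm uv" .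
qed

end


context sysd begin

lemma FF_deriv: "(FF has_derivative LL zw) (at zw)"
proof -
  have d1: "((\<lambda>zw::(complex^'n)\<times>(complex^'n). \<Sum>i\<in>UNIV. of_real (\<omega>$i) * (snd zw)$i) has_derivative
       (\<lambda>uv. \<Sum>i\<in>UNIV. of_real (\<omega>$i) * (snd uv)$i)) (at zw)"
    by (intro derivative_eq_intros) auto
  have d2: "((\<lambda>zw. \<Sum>j. cterm j zw) has_derivative (\<lambda>uv. \<Sum>j. cterm' j zw uv)) (at zw)"
  proof (rule series_has_derivative)
    show "(cterm n has_derivative cterm' n x) (at x)" for n x by (rule cterm_deriv)
    show "\<exists>M. summable M \<and> (\<forall>n x. norm x \<le> R \<longrightarrow> norm (cterm n x) \<le> M n \<and> (\<forall>h. norm (cterm' n x h) \<le> M n * norm h))" for R :: real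
    proof (intro exI conjI allI impI)
      show "summable (\<lambda>j. \<bar>c j\<bar> * W j \<bar>R\<bar> (2*pi*real CARD('n)))" by (rule Wsum) auto
      fix n and x h :: "(complex^'n)\<times>(complex^'n)" assume "norm x \<le> R"
      then have x: "norm x \<le> \<bar>R\<bar>" by simp
      show "norm (cterm n x) \<le> \<bar>c n\<bar> * W n \<bar>R\<bar> (2*pi*real CARD('n))" by (rule cterm_bounds(1)[OF x])
      show "norm (cterm' n x h) \<le> \<bar>c n\<bar> * W n \<bar>R\<bar> (2*pi*real CARD('n)) * norm h" by (rule cterm_bounds(2)[OF x])
    qed
  qed
  show ?thesis unfolding FF_def LL_def by (rule has_derivative_add[OF d1 d2])
qed

lemma LL_hom: "LL zw (a *s u, a *s v) = a * LL zw (u, v)"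
proof -
  have t: "cterm' j zw (a *s u, a *s v) = a * cterm' j zw (u, v)" for j
    unfolding cterm'_def by (simp add: ck_lin1 algebra_simps)
  have s: "summable (\<lambda>j. cterm' j zw (u, v))"
    by (rule summable_comparison_test[OF _ summable_mult2[OF Wsum[of "norm zw" "2*pi*real CARD('n)"], of "norm (u,v)"]])
       (use cterm_bounds(2)[OF order_refl] in auto)
  have "(\<Sum>j. cterm' j zw (a *s u, a *s v)) = a * (\<Sum>j. cterm' j zw (u, v))"
    unfolding t by (rule suminf_mult[OF s])
  moreover have "(\<Sum>i\<in>UNIV. of_real (\<omega>$i) * (a *s v)$i) = a * (\<Sum>i\<in>UNIV. of_real (\<omega>$i) * v$i)"
    by (simp add: sum_distrib_left mult_ac)
  ultimately show ?thesis unfolding LL_def by (simp add: distrib_left)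
qed

lemma FF_periodic: "FF (z + axis i 1, w) = FF (z, w)"
  by (simp only: FF_def cterm_def fst_conv snd_conv ck_lin2 cos_shift_c)

lemma ck_cvec: "ck j (cvec \<theta>) = of_real (kv j \<bullet> \<theta>)"
  unfolding ck_def cvec_def kv_def by (simp add: inner_vec_def)

lemma FF_real: "FF (cvec \<theta>, cvec r) = of_real (H \<theta> r)"
proof -
  have t: "cterm j (cvec \<theta>, cvec r) = of_real (c j * (r$i0)^(p j) * cos (2*pi*(kv j \<bullet> \<theta>)))" for j
  proof -
    have "cos (of_real (2*pi) * of_real (kv j \<bullet> \<theta>)) = (of_real (cos (2*pi*(kv j \<bullet> \<theta>))) :: complex)"
      by (simp only: of_real_mult[symmetric] cos_of_real)
    then show ?thesis unfolding cterm_def fst_conv snd_conv ck_cvec by (simp add: cvec_def)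
  qed
  have l: "(\<Sum>i\<in>UNIV. of_real (\<omega>$i) * (cvec r)$i) = (of_real (\<omega> \<bullet> r) :: complex)"
    by (simp add: cvec_def inner_vec_def)
  have sm: "(\<Sum>j. (of_real (c j * (r$i0)^(p j) * cos (2*pi*(kv j \<bullet> \<theta>))) :: complex))
      = of_real (\<Sum>j. c j * (r$i0)^(p j) * cos (2*pi*(kv j \<bullet> \<theta>)))"
    by (rule suminf_of_real[OF Phi_summable, symmetric])
  show ?thesis unfolding FF_def H_def Phi_def t snd_conv l sm by (simp only: of_real_add)
qed

lemma real_entire: "real_entire_ham H"
  unfolding real_entire_ham_def
proof (intro conjI allI exI)
  show "H (\<theta> + axis i 1) r = H \<theta> r" for \<theta> r i by (rule H_periodic)
  show "c_entire2 FF" unfolding c_entire2_def using FF_deriv LL_hom by blast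
  show "FF (z + axis i 1, w) = FF (z, w)" for z w i by (rule FF_periodic)
  show "FF (cvec \<theta>, cvec r) = complex_of_real (H \<theta> r)" for \<theta> r by (rule FF_real)
qed

end


lemma finite_mdeg: "finite {J :: 'n::finite \<Rightarrow> nat. mdeg J \<le> K}"
proof -
  have "{J :: 'n \<Rightarrow> nat. mdeg J \<le> K} \<subseteq> {f. \<forall>x. (x \<in> UNIV \<longrightarrow> f x \<in> {..K}) \<and> (x \<notin> UNIV \<longrightarrow> f x = 0)}"
  proof
    fix J :: "'n \<Rightarrow> nat" assume "J \<in> {J. mdeg J \<le> K}"
    then have "mdeg J \<le> K" by simp
    moreover have "J x \<le> mdeg J" for x unfolding mdeg_def by (rule member_le_sum) auto
    ultimately have "J x \<le> K" for x using le_trans by blast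
    then show "J \<in> {f. \<forall>x. (x \<in> UNIV \<longrightarrow> f x \<in> {..K}) \<and> (x \<notin> UNIV \<longrightarrow> f x = 0)}"
      by simp
  qed
  moreover have "finite {f :: 'n \<Rightarrow> nat. \<forall>x. (x \<in> UNIV \<longrightarrow> f x \<in> {..K}) \<and> (x \<notin> UNIV \<longrightarrow> f x = 0)}"
    by (rule finite_set_of_finite_funs) auto
  ultimately show ?thesis by (rule finite_subset)
qed

lemma grad_zero: "grad (\<lambda>_. 0::real) (\<theta>::real^'n) = 0"
proof -
  have "((\<lambda>_::real^'n. 0::real) has_derivative (\<lambda>_. 0)) (at \<theta>)" by simp
  from grad_eq[OF this] show ?thesis by (simp add: vec_eq_iff)
qed

context sysd begin

definition hh :: "nat \<Rightarrow> real^'n \<Rightarrow> real" where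
  "hh j \<theta> = - c j * sin (2*pi*(kv j \<bullet> \<theta>)) / (2*pi*dl j)"

definition EE :: "nat \<Rightarrow> 'n \<Rightarrow> nat" where
  "EE j = (\<lambda>i. if i = i0 then p j else 0)"

definition aa :: "('n \<Rightarrow> nat) \<Rightarrow> real^'n \<Rightarrow> real" where
  "aa J = (if J \<in> range EE then hh (inv EE J) else (\<lambda>_. 0))"

lemma mdeg_EE: "mdeg (EE j) = p j"
  unfolding mdeg_def EE_def by simp

lemma mmono_EE: "mmono r (EE j) = (r$i0)^(p j)"
proof -
  have "mmono r (EE j) = (\<Prod>i\<in>UNIV. if i = i0 then (r$i0)^(p j) else 1)"
    unfolding mmono_def EE_def by (rule prod.cong) auto
  then show ?thesis by simp
qed

lemma inj_EE: "inj p \<Longrightarrow> inj EE"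
  unfolding inj_def EE_def by (metis (full_types))

lemma hh_deriv: "(hh j has_derivative (\<lambda>h. - c j * (cos (2*pi*(kv j \<bullet> \<theta>)) * (2*pi*(kv j \<bullet> h))) / (2*pi*dl j))) (at \<theta>)"
  unfolding hh_def using dl_nz[of j] by (auto intro!: derivative_eq_intros simp: fun_eq_iff algebra_simps)

lemma grad_hh: "grad (hh j) \<theta> = (- c j * cos (2*pi*(kv j \<bullet> \<theta>)) / dl j) *\<^sub>R kv j"
  unfolding grad_eq[OF hh_deriv] vec_eq_iff using dl_nz[of j]
  by (auto simp: inner_axis kv_def field_simps)

lemma hh_periodic: "hh j (\<theta> + axis i 1) = hh j \<theta>"
  unfolding hh_def by (simp add: kv_shift sin_shift)

lemma hh_analytic: "real_analytic_periodic (hh j)"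
  unfolding real_analytic_periodic_def
proof (intro conjI allI exI)
  show "hh j (\<theta> + axis i 1) = hh j \<theta>" for \<theta> i by (rule hh_periodic)
  let ?G = "\<lambda>z. - of_real (c j) * sin (of_real (2*pi) * ck j z) / of_real (2*pi*dl j) :: complex"
  show "open (UNIV :: (complex^'n) set)" by simp
  show "range cvec \<subseteq> (UNIV :: (complex^'n) set)" by simp
  show "c_holo_on UNIV ?G"
    unfolding c_holo_on_def
  proof
    fix z :: "complex^'n"
    have d_ck: "((\<lambda>z. of_real (2*pi) * ck j z) has_derivative (\<lambda>v. of_real (2*pi) * ck j v)) (at z)"
      unfolding ck_def by (intro derivative_eq_intros) auto
    have "(?G has_derivative (\<lambda>v. - of_real (c j) * (cos (of_real (2*pi) * ck j z) * (of_real (2*pi) * ck j v)) / of_real (2*pi*dl j))) (at z)"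
      using has_derivative_csin[OF d_ck] dl_nz[of j] by (auto intro!: derivative_eq_intros simp: fun_eq_iff)
    moreover have "\<forall>a v. - of_real (c j) * (cos (of_real (2*pi) * ck j z) * (of_real (2*pi) * ck j (a *s v))) / of_real (2*pi*dl j)
        = a * (- of_real (c j) * (cos (of_real (2*pi) * ck j z) * (of_real (2*pi) * ck j v)) / of_real (2*pi*dl j))"
      by (simp add: ck_lin1 algebra_simps)
    ultimately show "\<exists>L. (?G has_derivative L) (at z) \<and> (\<forall>a v. L (a *s v) = a * L v)" by blast
  qed
  show "?G (cvec \<theta>) = complex_of_real (hh j \<theta>)" for \<theta>
  proof -
    have "sin (of_real (2*pi) * of_real (kv j \<bullet> \<theta>)) = (of_real (sin (2*pi*(kv j \<bullet> \<theta>))) :: complex)"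
      by (simp only: of_real_mult[symmetric] sin_of_real)
    then show ?thesis unfolding ck_cvec hh_def by simp
  qed
qed

lemma zero_analytic: "real_analytic_periodic (\<lambda>_::real^'n. 0::real)"
  unfolding real_analytic_periodic_def
proof (intro conjI allI exI)
  show "open (UNIV :: (complex^'n) set)" by simp
  show "range cvec \<subseteq> (UNIV :: (complex^'n) set)" by simp
  show "c_holo_on UNIV (\<lambda>_. 0::complex)" unfolding c_holo_on_def by (auto intro!: exI[of _ "\<lambda>_. 0"])
qed auto

lemma aa_analytic: "real_analytic_periodic (aa J)"
  unfolding aa_def using hh_analytic zero_analytic by auto

lemma aa_EE: "inj p \<Longrightarrow> aa (EE j) = hh j"
  unfolding aa_def using inj_EE by (simp add: inv_f_f)

lemma aa_low: "inj p \<Longrightarrow> mdeg J \<le> 1 \<Longrightarrow> aa J = (\<lambda>_. 0)"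
  unfolding aa_def using mdeg_EE p2 by (auto, metis le_trans not_less_eq_eq numeral_2_eq_2)

end


lemma suminf_split_fin:
  fixes f :: "nat \<Rightarrow> real"
  assumes "summable f" "finite F"
  shows "suminf f - sum f F = (\<Sum>j. if j \<in> F then 0 else f j)"
proof -
  have s2: "(\<lambda>j. if j \<in> F then f j else 0) sums (sum f F)" by (rule sums_If_finite_set[OF assms(2)])
  have "suminf f - sum f F = suminf f - (\<Sum>j. if j \<in> F then f j else 0)" using s2 by (simp add: sums_iff)
  also have "\<dots> = (\<Sum>j. f j - (if j \<in> F then f j else 0))"
    by (rule suminf_diff[OF assms(1)]) (use s2 in \<open>simp add: sums_iff\<close>)
  also have "\<dots> = (\<Sum>j. if j \<in> F then 0 else f j)" by (rule suminf_cong) simp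
  finally show ?thesis .
qed

definition ee :: "'n \<Rightarrow> 'n \<Rightarrow> nat" where "ee i = (\<lambda>k. if k = i then 1 else 0)"

lemma mdeg_ee: "mdeg (ee i) = 1" unfolding mdeg_def ee_def by simp

lemma mmono_ee: "mmono r (ee i) = r $ i"
proof -
  have "mmono r (ee i) = (\<Prod>k\<in>UNIV. if k = i then r$k else 1)"
    unfolding mmono_def ee_def by (rule prod.cong) auto
  then show ?thesis by simp
qed

lemma lin_sum:
  fixes \<omega> r :: "real^'n"
  shows "(\<Sum>J\<in>{J. mdeg J \<le> K}. lin_coeffs \<omega> J * mmono r J) = (if 1 \<le> K then \<omega> \<bullet> r else 0)"
proof -
  let ?S = "{J :: 'n \<Rightarrow> nat. mdeg J \<le> K}"
  have "(\<Sum>J\<in>?S. lin_coeffs \<omega> J * mmono r J) = (\<Sum>J\<in>?S. \<Sum>i\<in>UNIV. if J = ee i then \<omega>$i * r$i else 0)"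
    unfolding lin_coeffs_def ee_def[symmetric]
    by (rule sum.cong) (auto simp: sum_distrib_right mmono_ee intro!: sum.cong)
  also have "\<dots> = (\<Sum>i\<in>UNIV. \<Sum>J\<in>?S. if J = ee i then \<omega>$i * r$i else 0)" by (rule sum.swap)
  also have "\<dots> = (\<Sum>i\<in>UNIV. if 1 \<le> K then \<omega>$i * r$i else 0)"
  proof (rule sum.cong)
    fix i
    have "(\<Sum>J\<in>?S. if J = ee i then \<omega>$i * r$i else 0) = (if ee i \<in> ?S then \<omega>$i * r$i else 0)"
      by (rule sum.delta[OF finite_mdeg])
    then show "(\<Sum>J\<in>?S. if J = ee i then \<omega>$i * r$i else 0) = (if 1 \<le> K then \<omega>$i * r$i else 0)"
      by (simp add: mdeg_ee)
  qed simp
  also have "\<dots> = (if 1 \<le> K then \<omega> \<bullet> r else 0)" by (simp add: inner_vec_def)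
  finally show ?thesis .
qed

context sysd begin

lemma grad_sum:
  assumes injp: "inj p"
  shows "(\<Sum>J\<in>{J. mdeg J \<le> K}. mmono r J *\<^sub>R grad (aa J) \<theta>)
       = (\<Sum>j\<in>{j. p j \<le> K}. ((r$i0)^(p j) * (- c j * cos (2*pi*(kv j \<bullet> \<theta>)) / dl j)) *\<^sub>R kv j)"
proof -
  let ?S = "{J :: 'n \<Rightarrow> nat. mdeg J \<le> K}" and ?F = "{j. p j \<le> K}"
  let ?g = "\<lambda>J. mmono r J *\<^sub>R grad (aa J) \<theta>"
  have fF: "finite ?F" using finite_vimageI[OF finite_atMost[of K] injp] by (simp add: vimage_def)
  have sub: "EE ` ?F \<subseteq> ?S" by (auto simp: mdeg_EE)
  have z: "\<forall>J\<in>?S - EE ` ?F. ?g J = 0"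
  proof
    fix J assume J: "J \<in> ?S - EE ` ?F"
    have "J \<notin> range EE" using J mdeg_EE by auto
    then have "aa J = (\<lambda>_. 0)" unfolding aa_def by simp
    then show "?g J = 0" by (simp add: grad_zero)
  qed
  have "sum ?g ?S = sum ?g (EE ` ?F)"
    by (rule sum.mono_neutral_right[OF finite_mdeg sub z])
  also have "\<dots> = sum (?g \<circ> EE) ?F"
    by (rule sum.reindex) (use inj_EE[OF injp] in \<open>auto intro: inj_on_subset\<close>)
  also have "\<dots> = (\<Sum>j\<in>?F. ((r$i0)^(p j) * (- c j * cos (2*pi*(kv j \<bullet> \<theta>)) / dl j)) *\<^sub>R kv j)"
    by (rule sum.cong) (simp_all add: aa_EE[OF injp] mmono_EE grad_hh)
  finally show ?thesis .
qed

lemma H_shift: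
  assumes fF: "finite F"
  shows "H \<theta> (r + (\<Sum>j\<in>F. ((r$i0)^(p j) * (- c j * cos (2*pi*(kv j \<bullet> \<theta>)) / dl j)) *\<^sub>R kv j))
       = \<omega> \<bullet> r + (\<Sum>j. if j \<in> F then 0 else c j * (r$i0)^(p j) * cos (2*pi*(kv j \<bullet> \<theta>)))"
proof -
  let ?x = "\<lambda>j. (r$i0)^(p j) * (- c j * cos (2*pi*(kv j \<bullet> \<theta>)) / dl j)"
  let ?v = "\<Sum>j\<in>F. ?x j *\<^sub>R kv j"
  have v0: "?v $ i0 = 0" by (simp add: kv_nth_i0)
  have wv: "\<omega> \<bullet> ?v = - (\<Sum>j\<in>F. c j * (r$i0)^(p j) * cos (2*pi*(kv j \<bullet> \<theta>)))"
  proof -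
    have "\<omega> \<bullet> ?v = (\<Sum>j\<in>F. ?x j * dl j)" by (simp add: inner_sum_right dl_def inner_commute)
    also have "\<dots> = (\<Sum>j\<in>F. - (c j * (r$i0)^(p j) * cos (2*pi*(kv j \<bullet> \<theta>))))"
      by (rule sum.cong) (use dl_nz in auto)
    finally show ?thesis by (simp add: sum_negf)
  qed
  have ri: "(r + ?v) $ i0 = r $ i0" using v0 by simp
  have "H \<theta> (r + ?v) = \<omega> \<bullet> r + \<omega> \<bullet> ?v + Phi \<theta> (r$i0)"
    unfolding H_def ri inner_add_right by simp
  also have "\<dots> = \<omega> \<bullet> r + (Phi \<theta> (r$i0) - (\<Sum>j\<in>F. c j * (r$i0)^(p j) * cos (2*pi*(kv j \<bullet> \<theta>))))"
    using wv by simp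
  also have "\<dots> = \<omega> \<bullet> r + (\<Sum>j. if j \<in> F then 0 else c j * (r$i0)^(p j) * cos (2*pi*(kv j \<bullet> \<theta>)))"
    unfolding Phi_def by (subst suminf_split_fin[OF Phi_summable fF]) rule
  finally show ?thesis .
qed

lemma has_BNF_H:
  assumes injp: "inj p"
  shows "has_BNF H (lin_coeffs \<omega>)"
  unfolding has_BNF_def
proof (rule exI[of _ aa], intro conjI allI impI)
  show "real_analytic_periodic (aa j)" for j by (rule aa_analytic)
  show "aa j = (\<lambda>_. 0)" if "mdeg j \<le> 1" for j by (rule aa_low[OF injp that])
  fix K \<theta>
  let ?C = "norm \<omega> + (\<Sum>j. \<bar>c j\<bar>)"
  show "\<exists>C \<delta>. 0 < \<delta> \<and> (\<forall>r. norm r < \<delta> \<longrightarrow>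
      \<bar>H \<theta> (r + (\<Sum>J\<in>{J. mdeg J \<le> K}. mmono r J *\<^sub>R grad (aa J) \<theta>)) - (\<Sum>J\<in>{J. mdeg J \<le> K}. lin_coeffs \<omega> J * mmono r J)\<bar>
        \<le> C * norm r ^ (K + 1))"
  proof (intro exI conjI allI impI)
    show "(0::real) < 1" by simp
    fix r :: "real^'n" assume r1: "norm r < 1"
    let ?F = "{j. p j \<le> K}"
    let ?T = "\<Sum>j. if j \<in> ?F then 0 else c j * (r$i0)^(p j) * cos (2*pi*(kv j \<bullet> \<theta>))"
    have fF: "finite ?F" using finite_vimageI[OF finite_atMost[of K] injp] by (simp add: vimage_def)
    have s: "\<bar>r$i0\<bar> \<le> norm r" by (rule component_le_norm_cart)
    have cs: "0 \<le> (\<Sum>j. \<bar>c j\<bar>)" by (rule suminf_nonneg[OF sum_c]) simp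
    have Tb: "\<bar>?T\<bar> \<le> (\<Sum>j. \<bar>c j\<bar>) * norm r ^ (K+1)"
    proof -
      have "\<bar>?T\<bar> \<le> (\<Sum>j. \<bar>c j\<bar>) * \<bar>r$i0\<bar>^(K+1)"
        by (rule tail_bound) (use s r1 in auto)
      also have "\<dots> \<le> (\<Sum>j. \<bar>c j\<bar>) * norm r ^ (K+1)"
        by (intro mult_left_mono power_mono s cs) simp
      finally show ?thesis .
    qed
    have eq: "H \<theta> (r + (\<Sum>J\<in>{J. mdeg J \<le> K}. mmono r J *\<^sub>R grad (aa J) \<theta>)) - (\<Sum>J\<in>{J. mdeg J \<le> K}. lin_coeffs \<omega> J * mmono r J)
       = (if 1 \<le> K then 0 else \<omega> \<bullet> r) + ?T"
      unfolding grad_sum[OF injp] H_shift[OF fF] lin_sum by simp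
    show "\<bar>H \<theta> (r + (\<Sum>J\<in>{J. mdeg J \<le> K}. mmono r J *\<^sub>R grad (aa J) \<theta>)) - (\<Sum>J\<in>{J. mdeg J \<le> K}. lin_coeffs \<omega> J * mmono r J)\<bar>
        \<le> ?C * norm r ^ (K + 1)"
    proof (cases "1 \<le> K")
      case True
      have X: "0 \<le> norm \<omega> * norm r ^ (K+1)" by simp
      have "\<bar>?T\<bar> \<le> norm \<omega> * norm r ^ (K+1) + (\<Sum>j. \<bar>c j\<bar>) * norm r ^ (K+1)" using Tb X by linarith
      then show ?thesis unfolding eq using True by (simp add: distrib_right)
    next
      case False
      then have K0: "K = 0" by simp
      have "\<bar>\<omega> \<bullet> r\<bar> \<le> norm \<omega> * norm r" by (rule Cauchy_Schwarz_ineq2)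
      then show ?thesis unfolding eq using Tb K0 by (simp add: distrib_right) 
    qed
  qed
qed

end


lemma root_small:
  fixes \<rho> :: real
  assumes r0: "0 < \<rho>" and pw: "\<rho>^m \<le> exp (- ((real j+1)^2))" and m1: "1 \<le> m" and m3: "real m \<le> 3*(real j+1)"
  shows "\<rho> \<le> exp (-1/3)^j"
proof -
  have "\<rho> \<le> exp (-(real j+1)/3)"
  proof (rule ccontr)
    assume "\<not> ?thesis"
    then have lt: "exp (-(real j+1)/3) < \<rho>" by simp
    have "exp (-(real j+1)/3)^m < \<rho>^m" by (rule power_strict_mono[OF lt]) (use m1 in auto)
    moreover have "exp (-(real j+1)/3)^m = exp (real m * (-(real j+1)/3))" by (rule exp_of_nat_mult[symmetric])
    moreover have "- ((real j+1)^2) \<le> real m * (-(real j+1)/3)"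
    proof -
      have "real m * (real j + 1) \<le> 3*(real j+1) * (real j + 1)" by (rule mult_right_mono[OF m3]) simp
      then show ?thesis by (simp add: power2_eq_square field_simps)
    qed
    ultimately show False using pw by (smt (verit) exp_le_cancel_iff)
  qed
  also have "\<dots> \<le> exp (- real j / 3)" by simp
  also have "\<dots> = exp (-1/3)^j" using exp_of_nat_mult[of j "-1/3"] by simp
  finally show ?thesis .
qed

lemma powr_neg_nat: "0 < (\<rho>::real) \<Longrightarrow> \<rho> powr (- real n) = 1 / \<rho>^n"
  by (simp add: powr_minus powr_realpow divide_inverse)

lemma geo_lim: "(\<lambda>j. exp (-1/3::real)^j) \<longlonglongrightarrow> 0"
  by (rule LIMSEQ_power_zero) simp

context sysd begin

lemma q_facts:
  assumes small: "\<And>j. \<bar>dl j\<bar> \<le> (c j)^4 * exp (- ((real j + 1)^2))"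
    and cle1: "\<And>j. \<bar>c j\<bar> \<le> 1" and cnz: "\<And>j. c j \<noteq> 0"
  shows "0 < \<bar>dl j\<bar> / (2*\<bar>c j\<bar>)" "\<bar>dl j\<bar> / (2*\<bar>c j\<bar>) < 1"
    "\<bar>dl j\<bar> \<le> \<bar>c j\<bar> * exp (- ((real j + 1)^2))"
    "\<bar>dl j\<bar> / (2*\<bar>c j\<bar>) \<le> exp (- ((real j + 1)^2))"
    "\<bar>dl j\<bar> \<le> 8 * (c j)^2"
    "\<bar>dl j\<bar> / (2*\<bar>c j\<bar>) \<le> \<bar>c j\<bar>^3 / 2"
proof -
  have c0: "0 < \<bar>c j\<bar>" using cnz[of j] by simp
  have d0: "0 < \<bar>dl j\<bar>" using dl_nz[of j] by simp
  have e1: "exp (- ((real j + 1)^2)) \<le> 1" by simp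
  have c4: "(c j)^4 = \<bar>c j\<bar>^3 * \<bar>c j\<bar>" by (simp add: power_abs[symmetric] power_Suc2[symmetric] numeral_eq_Suc)
  have c3: "\<bar>c j\<bar>^3 \<le> 1" using cle1[of j] by (simp add: power_le_one)
  have "(c j)^4 \<le> \<bar>c j\<bar>" using c4 c3 c0 by (simp add: mult_le_cancel_right1)
  have dl1: "\<bar>dl j\<bar> \<le> \<bar>c j\<bar>^3 * \<bar>c j\<bar> * exp (- ((real j + 1)^2))" using small[of j] c4 by simp
  have dl2: "\<bar>dl j\<bar> \<le> \<bar>c j\<bar>^3 * \<bar>c j\<bar>"
  proof -
    have "\<bar>c j\<bar>^3 * \<bar>c j\<bar> * exp (- ((real j + 1)^2)) \<le> \<bar>c j\<bar>^3 * \<bar>c j\<bar> * 1"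
      by (rule mult_left_mono[OF e1]) simp
    then show ?thesis using dl1 by linarith
  qed
  show "\<bar>dl j\<bar> \<le> \<bar>c j\<bar> * exp (- ((real j + 1)^2))"
    using dl1 mult_right_mono[OF c3, of "\<bar>c j\<bar> * exp (- ((real j + 1)^2))"] by (simp add: mult_ac)
  show "0 < \<bar>dl j\<bar> / (2*\<bar>c j\<bar>)" using c0 d0 by simp
  show "\<bar>dl j\<bar> / (2*\<bar>c j\<bar>) \<le> \<bar>c j\<bar>^3 / 2" using dl2 c0 by (simp add: field_simps)
  show "\<bar>dl j\<bar> / (2*\<bar>c j\<bar>) < 1"
  proof -
    have "\<bar>c j\<bar>^3 * \<bar>c j\<bar> \<le> 1 * \<bar>c j\<bar>" by (rule mult_right_mono[OF c3]) simp
    then have "\<bar>dl j\<bar> \<le> \<bar>c j\<bar>" using dl2 by linarith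
    then show ?thesis using c0 by (simp add: field_simps)
  qed
  show "\<bar>dl j\<bar> / (2*\<bar>c j\<bar>) \<le> exp (- ((real j + 1)^2))"
  proof -
    have "\<bar>dl j\<bar> \<le> \<bar>c j\<bar> * exp (- ((real j + 1)^2))"
      using dl1 mult_right_mono[OF c3, of "\<bar>c j\<bar> * exp (- ((real j + 1)^2))"] by (simp add: mult_ac)
    then show ?thesis using c0 by (simp add: field_simps)
  qed
  show "\<bar>dl j\<bar> \<le> 8 * (c j)^2"
  proof -
    have "\<bar>c j\<bar>^3 * \<bar>c j\<bar> \<le> 1 * (c j)^2"
    proof -
      have "\<bar>c j\<bar>^3 * \<bar>c j\<bar> = (c j)^2 * (c j)^2" by (simp add: power2_eq_square power3_eq_cube)
      also have "\<dots> \<le> 1 * (c j)^2"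
      proof (intro mult_right_mono)
        have "\<bar>c j\<bar> * \<bar>c j\<bar> \<le> 1 * 1" using cle1[of j] by (intro mult_mono) auto
        then show "(c j)^2 \<le> 1" by (simp add: power2_eq_square abs_mult[symmetric])
      qed simp
      finally show ?thesis .
    qed
    then show ?thesis using dl2 by simp
  qed
qed

end


context sysd begin

lemma diffusive_H:
  assumes small: "\<And>j. \<bar>dl j\<bar> \<le> (c j)^4 * exp (- ((real j + 1)^2))"
    and cle1: "\<And>j. \<bar>c j\<bar> \<le> 1" and cnz: "\<And>j. c j \<noteq> 0"
  shows "diffusive H"
  unfolding diffusive_def
proof (intro exI[of _ 1] conjI allI impI)
  show "(0::real) < 1" by simp
  fix \<rho> :: real assume r: "0 < \<rho> \<and> \<rho> < 1"
  define L where "L = - ln \<rho>"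
  have L0: "0 < L" using r unfolding L_def by simp
  define j where "j = nat \<lceil>2*L\<rceil> + 1"
  have j1: "1 \<le> j" unfolding j_def by simp
  have jL: "2*L \<le> real j + 1" unfolding j_def by linarith
  have e: "exp (- ((real j+1)^2)) \<le> \<rho>^(j+3)"
  proof -
    have "\<rho>^(j+3) = exp (real (j+3) * ln \<rho>)" using r exp_of_nat_mult[of "j+3" "ln \<rho>"] by simp
    moreover have "- ((real j+1)^2) \<le> real (j+3) * ln \<rho>"
    proof -
      have "real (j+3) * L \<le> (2*(real j+1)) * L" using j1 L0 by (intro mult_right_mono) auto
      also have "\<dots> = (real j + 1) * (2*L)" by simp
      also have "\<dots> \<le> (real j + 1) * (real j + 1)" using jL by (intro mult_left_mono) auto
      finally show ?thesis unfolding L_def by (simp add: power2_eq_square)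
    qed
    ultimately show ?thesis by simp
  qed
  have pw: "\<rho>^(j+3) \<le> \<rho>^(p j + 1)" using r pj[of j] by (intro power_decreasing) auto
  have "\<bar>dl j\<bar> \<le> \<bar>c j\<bar> * exp (- ((real j + 1)^2))" by (rule q_facts(3)[OF small cle1 cnz])
  also have "\<dots> \<le> \<bar>c j\<bar> * \<rho>^(p j + 1)" using e pw by (intro mult_left_mono) auto
  also have "\<dots> \<le> 2 * \<rho>^(p j + 1) * \<bar>c j\<bar>" using r by simp
  finally obtain t where "t \<in> escape_times H \<rho>" using escape[of \<rho> j] r by blast
  then show "escape_times H \<rho> \<noteq> {}" by blast
qed

lemma T_bound:
  assumes r: "0 < \<rho>" "\<rho> < 1" and cond: "\<bar>dl j\<bar> \<le> 2 * \<rho>^(p j + 1) * \<bar>c j\<bar>" and rn: "\<rho>^n \<le> 2 * \<bar>dl j\<bar>"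
  shows "escape_times H \<rho> \<noteq> {} \<and> T_time H \<rho> \<le> \<rho> powr (- real n)"
proof -
  obtain t where t: "t \<in> escape_times H \<rho>" "t \<le> 1 / (2 * \<bar>dl j\<bar>)" using escape[OF r cond] by blast
  have d0: "0 < \<bar>dl j\<bar>" using dl_nz[of j] by simp
  have "T_time H \<rho> \<le> t" by (rule T_le[OF t(1)])
  also have "\<dots> \<le> 1 / (2 * \<bar>dl j\<bar>)" by (rule t(2))
  also have "\<dots> \<le> 1 / \<rho>^n" using rn r d0 by (intro divide_left_mono) auto
  also have "\<dots> = \<rho> powr (- real n)" using r by (simp add: powr_neg_nat)
  finally show ?thesis using t by blast
qed

lemma seq_a:
  assumes small: "\<And>j. \<bar>dl j\<bar> \<le> (c j)^4 * exp (- ((real j + 1)^2))"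
    and cle1: "\<And>j. \<bar>c j\<bar> \<le> 1" and cnz: "\<And>j. c j \<noteq> 0" and pjj: "\<And>j. p j = j + 2"
  shows "\<exists>rs :: nat \<Rightarrow> real. (\<forall>n. rs n > 0) \<and> rs \<longlonglongrightarrow> 0 \<and>
            (\<forall>\<^sub>F n in sequentially. escape_times H (rs n) \<noteq> {} \<and> T_time H (rs n) \<le> rs n powr (- real n))"
proof -
  define q where "q j = \<bar>dl j\<bar> / (2*\<bar>c j\<bar>)" for j
  define rf where "rf j = root (j+3) (q j)" for j
  define J where "J n = n div 2 - 3" for n :: nat
  have q0: "0 < q j" "q j < 1" for j unfolding q_def using q_facts[OF small cle1 cnz] by auto
  have rf0: "0 < rf j" for j unfolding rf_def using q0 by (simp add: real_root_gt_zero)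
  have rf1: "rf j < 1" for j unfolding rf_def using q0 by simp
  have rfp: "rf j ^ (j+3) = q j" for j unfolding rf_def using q0 by (simp add: less_imp_le)
  have rfb: "rf j \<le> exp (-1/3)^j" for j
  proof (rule root_small[OF rf0])
    show "rf j ^ (j+3) \<le> exp (- ((real j+1)^2))" unfolding rfp q_def by (rule q_facts(4)[OF small cle1 cnz])
  qed auto
  have Jlim: "filterlim J sequentially sequentially"
    unfolding filterlim_at_top eventually_sequentially
  proof
    fix Z show "\<exists>N. \<forall>n\<ge>N. Z \<le> J n" by (rule exI[of _ "2*Z+6"]) (auto simp: J_def)
  qed
  have blim: "(\<lambda>n. exp (-1/3::real)^(J n)) \<longlonglongrightarrow> 0"
    using filterlim_compose[OF geo_lim Jlim] by simp
  show ?thesis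
  proof (intro exI[of _ "\<lambda>n. rf (J n)"] conjI allI)
    show "0 < rf (J n)" for n by (rule rf0)
    show "(\<lambda>n. rf (J n)) \<longlonglongrightarrow> 0"
      by (rule tendsto_sandwich[OF always_eventually always_eventually tendsto_const blim])
         (use rfb in \<open>auto intro: less_imp_le rf0\<close>)
    show "\<forall>\<^sub>F n in sequentially. escape_times H (rf (J n)) \<noteq> {} \<and> T_time H (rf (J n)) \<le> rf (J n) powr (- real n)"
      unfolding eventually_sequentially
    proof (intro exI[of _ 6] allI impI)
      fix n :: nat assume n6: "6 \<le> n"
      let ?j = "J n"
      have nj: "2 * (?j + 3) \<le> n" unfolding J_def using n6 by presburger
      have e: "p ?j + 1 = ?j + 3" using pjj[of ?j] by simp
      have e2: "rf ?j ^ (p ?j + 1) = q ?j" unfolding e by (rule rfp)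
      have cond: "\<bar>dl ?j\<bar> \<le> 2 * rf ?j ^ (p ?j + 1) * \<bar>c ?j\<bar>"
        unfolding e2 q_def using cnz[of ?j] by simp
      have rn: "rf ?j ^ n \<le> 2 * \<bar>dl ?j\<bar>"
      proof -
        have "rf ?j ^ n \<le> rf ?j ^ (2 * (?j + 3))" by (rule power_decreasing[OF nj]) (use rf0 rf1 in \<open>auto intro: less_imp_le\<close>)
        also have "\<dots> = q ?j * q ?j"
        proof -
          have "rf ?j ^ (2 * (?j + 3)) = (rf ?j ^ (?j + 3)) ^ 2" by (simp only: power_mult mult.commute[of 2])
          then show ?thesis by (simp only: rfp power2_eq_square)
        qed
        also have "\<dots> = \<bar>dl ?j\<bar> * (\<bar>dl ?j\<bar> / (4 * (c ?j)^2))"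
          unfolding q_def by (simp add: power2_eq_square field_simps)
        also have "\<dots> \<le> \<bar>dl ?j\<bar> * 2"
        proof (rule mult_left_mono)
          have "0 < (c ?j)^2" using cnz[of ?j] by simp
          then show "\<bar>dl ?j\<bar> / (4 * (c ?j)^2) \<le> 2" using q_facts(5)[OF small cle1 cnz, of ?j] by (simp add: field_simps)
        qed simp
        finally show ?thesis by simp
      qed
      show "escape_times H (rf ?j) \<noteq> {} \<and> T_time H (rf ?j) \<le> rf ?j powr (- real n)"
        by (rule T_bound[OF rf0 rf1 cond rn])
    qed
  qed
qed

lemma seq_b:
  assumes small: "\<And>j. \<bar>dl j\<bar> \<le> (c j)^4 * exp (- ((real j + 1)^2))"
    and cle1: "\<And>j. \<bar>c j\<bar> \<le> 1" and cnz: "\<And>j. c j \<noteq> 0" and p2c: "\<And>j. p j = 2"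
  shows "\<exists>rs :: nat \<Rightarrow> real. (\<forall>n. rs n > 0) \<and> rs \<longlonglongrightarrow> 0 \<and>
            (\<forall>n. escape_times H (rs n) \<noteq> {} \<and> T_time H (rs n) \<le> rs n powr (- 4))"
proof -
  define q where "q j = \<bar>dl j\<bar> / (2*\<bar>c j\<bar>)" for j
  define rf where "rf j = root 3 (q j)" for j
  have q0: "0 < q j" "q j < 1" for j unfolding q_def using q_facts[OF small cle1 cnz] by auto
  have rf0: "0 < rf j" for j unfolding rf_def using q0 by (simp add: real_root_gt_zero)
  have rf1: "rf j < 1" for j unfolding rf_def using q0 by simp
  have rfp: "rf j ^ 3 = q j" for j unfolding rf_def using q0 by (simp add: less_imp_le)
  have rfb: "rf j \<le> exp (-1/3)^j" for j
  proof (rule root_small[OF rf0])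
    show "rf j ^ 3 \<le> exp (- ((real j+1)^2))" unfolding rfp q_def by (rule q_facts(4)[OF small cle1 cnz])
  qed auto
  show ?thesis
  proof (rule exI[of _ rf], intro conjI)
    show "\<forall>n. 0 < rf n" using rf0 by blast
    show "rf \<longlonglongrightarrow> 0"
      by (rule tendsto_sandwich[OF always_eventually always_eventually tendsto_const geo_lim])
         (use rfb in \<open>auto intro: less_imp_le rf0\<close>)
    show "\<forall>n. escape_times H (rf n) \<noteq> {} \<and> T_time H (rf n) \<le> rf n powr (- 4)"
    proof
    fix n
    have cond: "\<bar>dl n\<bar> \<le> 2 * rf n ^ (p n + 1) * \<bar>c n\<bar>"
      using cnz[of n] by (simp add: p2c rfp q_def)
    have r4: "rf n \<le> 4 * \<bar>c n\<bar>"
    proof (rule ccontr)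
      have "rf n ^ 3 \<le> \<bar>c n\<bar>^3 / 2" unfolding rfp q_def by (rule q_facts(6)[OF small cle1 cnz])
      also have "\<dots> \<le> (4 * \<bar>c n\<bar>)^3" by (simp add: power_mult_distrib)
      finally have h: "rf n ^ 3 \<le> (4 * \<bar>c n\<bar>)^3" .
      assume "\<not> rf n \<le> 4 * \<bar>c n\<bar>"
      then have "(4 * \<bar>c n\<bar>)^3 < rf n ^ 3" by (intro power_strict_mono) auto
      with h show False by simp
    qed
    have rn: "rf n ^ 4 \<le> 2 * \<bar>dl n\<bar>"
    proof -
      have "rf n ^ 4 = q n * rf n" using rfp[of n] by (simp add: power_Suc2[of _ 3, simplified])
      also have "\<dots> \<le> q n * (4 * \<bar>c n\<bar>)" using q0[of n] r4 by (intro mult_left_mono) auto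
      also have "\<dots> = 2 * \<bar>dl n\<bar>" unfolding q_def using cnz[of n] by simp
      finally show ?thesis .
    qed
    show "escape_times H (rf n) \<noteq> {} \<and> T_time H (rf n) \<le> rf n powr (- 4)"
      using T_bound[OF rf0 rf1 cond, of 4] rn by simp
    qed
  qed
qed

end


lemma csum_gen:
  fixes N :: "nat \<Rightarrow> real"
  assumes N1: "\<And>j. 1 \<le> N j" and R: "0 \<le> R" and A: "0 \<le> A"
  shows "summable (\<lambda>j. exp (- ((real j+1)^2 * (N j + 1))) * ((real j + 3) * (1+R)^(j+2) * (1 + A * N j) * exp (A * N j * R)))"
proof (rule summable_comparison_test_ev)
  define B where "B = 2 + 2*R + A + A*R"
  show "summable (\<lambda>j. exp (-1::real) * exp (-1) ^ j)" by (intro summable_mult summable_geometric) simp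
  show "\<forall>\<^sub>F j in sequentially. norm (exp (- ((real j+1)^2 * (N j + 1))) * ((real j + 3) * (1+R)^(j+2) * (1 + A * N j) * exp (A * N j * R))) \<le> exp (-1) * exp (-1) ^ j"
    unfolding eventually_sequentially
  proof (intro exI[of _ "nat \<lceil>B\<rceil>"] allI impI)
    fix j assume jB: "nat \<lceil>B\<rceil> \<le> j"
    have jB': "B \<le> real j" using jB by linarith
    define P where "P = (real j + 1) * (N j + 1)"
    have N0: "0 \<le> N j" using N1[of j] by simp
    have Pj: "real j + 1 \<le> P" unfolding P_def using N0 mult_left_mono[of 1 "N j + 1" "real j + 1"] by simp
    have PN: "N j \<le> P"
    proof -
      have "1 * (N j + 1) \<le> (real j + 1) * (N j + 1)" by (rule mult_right_mono) (use N0 in auto)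
      then show ?thesis unfolding P_def by simp
    qed
    have P0: "0 \<le> P" using Pj by simp
    have X1: "real j + 3 \<le> exp (real j + 2)" using exp_ge_add_one_self[of "real j + 2"] by simp
    have X2: "(1+R)^(j+2) \<le> exp ((real j + 2) * R)"
    proof -
      have "(1+R)^(j+2) \<le> exp R ^ (j+2)" by (rule power_mono) (use R exp_ge_add_one_self[of R] in auto)
      also have "\<dots> = exp (real (j+2) * R)" by (rule exp_of_nat_mult[symmetric])
      also have "real (j+2) = real j + 2" by simp
      finally show ?thesis .
    qed
    have X3: "1 + A * N j \<le> exp (A * N j)" by (rule exp_ge_add_one_self)
    have "(real j + 3) * (1+R)^(j+2) * (1 + A * N j) * exp (A * N j * R)
        \<le> exp (real j + 2) * exp ((real j + 2) * R) * exp (A * N j) * exp (A * N j * R)"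
      using X1 X2 X3 R A N0 by (intro mult_mono) auto
    also have "\<dots> = exp ((real j + 2) + (real j + 2) * R + A * N j + A * N j * R)" by (simp add: exp_add)
    also have "\<dots> \<le> exp (B * P)"
    proof -
      have a: "real j + 2 \<le> 2 * P" using Pj by simp
      have b: "(real j + 2) * R \<le> (2 * P) * R" by (rule mult_right_mono[OF a R])
      have c: "A * N j \<le> A * P" by (rule mult_left_mono[OF PN A])
      have d: "A * N j * R \<le> A * P * R" by (rule mult_right_mono[OF c R])
      have "(real j + 2) + (real j + 2) * R + A * N j + A * N j * R \<le> 2 * P + (2 * P) * R + A * P + A * P * R"
        using a b c d by linarith
      also have "\<dots> = B * P" unfolding B_def by (simp add: algebra_simps)
      finally show ?thesis by simp
    qed
    finally have X: "(real j + 3) * (1+R)^(j+2) * (1 + A * N j) * exp (A * N j * R) \<le> exp (B * P)" .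
    have "norm (exp (- ((real j+1)^2 * (N j + 1))) * ((real j + 3) * (1+R)^(j+2) * (1 + A * N j) * exp (A * N j * R)))
        = exp (- ((real j+1)^2 * (N j + 1))) * ((real j + 3) * (1+R)^(j+2) * (1 + A * N j) * exp (A * N j * R))"
      using R A N0 by simp
    also have "\<dots> \<le> exp (- ((real j+1)^2 * (N j + 1))) * exp (B * P)" by (intro mult_left_mono X) simp
    also have "\<dots> = exp (P * (B - (real j + 1)))" unfolding P_def by (simp add: exp_add[symmetric] power2_eq_square algebra_simps)
    also have "\<dots> \<le> exp (- (real j + 1))"
    proof -
      have "P * (B - (real j + 1)) \<le> P * (-1)" using jB' P0 by (intro mult_left_mono) auto
      also have "\<dots> \<le> - (real j + 1)" using Pj by simp
      finally show ?thesis by simp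
    qed
    also have "\<dots> = exp (real (Suc j) * (-1))" by simp
    also have "\<dots> = exp (-1) ^ (Suc j)" by (rule exp_of_nat_mult)
    also have "\<dots> = exp (-1) * exp (-1) ^ j" by simp
    finally show "norm (exp (- ((real j+1)^2 * (N j + 1))) * ((real j + 3) * (1+R)^(j+2) * (1 + A * N j) * exp (A * N j * R))) \<le> exp (-1) * exp (-1) ^ j" .
  qed
qed


theorem theoremD:
  fixes \<omega> :: "real^'n" and i0 :: 'n and kbar :: "nat \<Rightarrow> 'n \<Rightarrow> int"
  assumes dim: "CARD('n) \<ge> 3"
    and nonres: "\<forall>k :: 'n \<Rightarrow> int. (\<Sum>i\<in>UNIV. of_int (k i) * \<omega> $ i) = 0 \<longrightarrow> k = (\<lambda>_. 0)"
    and kbar_last: "\<forall>j. kbar j i0 = 0"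
    and liouv: "filterlim (\<lambda>j. ln \<bar>\<Sum>i\<in>UNIV - {i0}. of_int (kbar j i) * \<omega> $ i\<bar>
                  / real_of_int (Max ((\<lambda>i. \<bar>kbar j i\<bar>) ` (UNIV - {i0}))))
                at_bot sequentially"
  shows "(\<exists>H. real_entire_ham H \<and> ham_form H \<omega> \<and> has_BNF H (lin_coeffs \<omega>) \<and>
             diffusive H \<and>
             (\<exists>rs :: nat \<Rightarrow> real. (\<forall>n. rs n > 0) \<and> rs \<longlonglongrightarrow> 0 \<and>
                (\<forall>\<^sub>F n in sequentially. escape_times H (rs n) \<noteq> {} \<and>
                    T_time H (rs n) \<le> rs n powr (- real n))))
       \<and> (\<exists>H. real_entire_ham H \<and> ham_form H \<omega> \<and> diffusive H \<and>
             (\<exists>rs :: nat \<Rightarrow> real. (\<forall>n. rs n > 0) \<and> rs \<longlonglongrightarrow> 0 \<and>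
                (\<forall>n. escape_times H (rs n) \<noteq> {} \<and> T_time H (rs n) \<le> rs n powr (- 4))))"
proof -
  define D where "D x = (\<Sum>i\<in>UNIV - {i0}. of_int (kbar x i) * \<omega> $ i)" for x
  define Mx where "Mx x = Max ((\<lambda>i. \<bar>kbar x i\<bar>) ` (UNIV - {i0}))" for x
  define rat where "rat x = ln \<bar>D x\<bar> / real_of_int (Mx x)" for x
  have ev: "\<forall>\<^sub>F x in sequentially. rat x \<le> Z" for Z
    using liouv unfolding filterlim_at_bot rat_def D_def Mx_def by blast
  have ne: "UNIV - {i0} \<noteq> {}"
  proof
    assume "UNIV - {i0} = {}"
    then have u: "(UNIV :: 'n set) = {i0}" by blast
    have "CARD('n) = card {i0}" by (subst u) (rule refl)
    then have "CARD('n) = 1" by simp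
    then show False using dim by simp
  qed
  have "\<exists>m. infinite {x. kbar x m \<noteq> 0}"
  proof (rule ccontr)
    assume "\<not> ?thesis"
    then have "finite (\<Union>m. {x. kbar x m \<noteq> 0})" by auto
    then obtain B where B: "\<And>x m. kbar x m \<noteq> 0 \<Longrightarrow> x \<le> B" unfolding finite_nat_set_iff_bounded_le by blast
    obtain X where X: "\<And>x. X \<le> x \<Longrightarrow> rat x \<le> -1" using ev[of "-1"] unfolding eventually_sequentially by blast
    define x where "x = max X (Suc B)"
    have z: "kbar x m = 0" for m using B[of x m] unfolding x_def by fastforce
    have "rat x = 0" unfolding rat_def D_def Mx_def using z by simp
    moreover have "rat x \<le> -1" using X unfolding x_def by simp
    ultimately show False by simp
  qed
  then obtain m where minf: "infinite {x. kbar x m \<noteq> 0}" by blast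
  have mi0: "m \<noteq> i0"
  proof
    assume "m = i0"
    then have "{x. kbar x m \<noteq> 0} = {}" using kbar_last by simp
    then show False using minf by simp
  qed
  have "\<exists>x. kbar x m \<noteq> 0 \<and> rat x \<le> - (9 * (real j + 1)^2)" for j
  proof -
    obtain X where X: "\<And>x. X \<le> x \<Longrightarrow> rat x \<le> - (9 * (real j + 1)^2)"
      using ev[of "- (9 * (real j + 1)^2)"] unfolding eventually_sequentially by blast
    obtain x where "X \<le> x" "x \<in> {x. kbar x m \<noteq> 0}" using minf unfolding infinite_nat_iff_unbounded_le by blast
    then show ?thesis using X by blast
  qed
  then obtain \<sigma> where \<sigma>: "\<And>j. kbar (\<sigma> j) m \<noteq> 0" "\<And>j. rat (\<sigma> j) \<le> - (9 * (real j + 1)^2)" by metis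
  define k where "k j = kbar (\<sigma> j)" for j
  define N where "N j = real_of_int (Mx (\<sigma> j))" for j
  define dl0 where "dl0 j = (\<chi> i. real_of_int (k j i)) \<bullet> \<omega>" for j
  have fin: "finite ((\<lambda>i. \<bar>kbar x i\<bar>) ` (UNIV - {i0}))" for x by simp
  have kN: "\<bar>real_of_int (k j i)\<bar> \<le> N j" for j i
  proof (cases "i = i0")
    case True
    have "\<bar>kbar (\<sigma> j) m\<bar> \<le> Mx (\<sigma> j)" unfolding Mx_def by (rule Max_ge[OF fin]) (use mi0 in auto)
    then show ?thesis using True kbar_last unfolding k_def N_def by simp
  next
    case False
    have "\<bar>kbar (\<sigma> j) i\<bar> \<le> Mx (\<sigma> j)" unfolding Mx_def by (rule Max_ge[OF fin]) (use False in auto)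
    then show ?thesis unfolding k_def N_def by simp
  qed
  have N1: "1 \<le> N j" for j
  proof -
    have "1 \<le> \<bar>real_of_int (k j m)\<bar>" using \<sigma>(1)[of j] unfolding k_def by linarith
    then show ?thesis using kN[of j m] by simp
  qed
  have dlD: "dl0 j = D (\<sigma> j)" for j
  proof -
    have "dl0 j = (\<Sum>i\<in>UNIV. real_of_int (k j i) * \<omega> $ i)" unfolding dl0_def by (simp add: inner_vec_def)
    also have "\<dots> = real_of_int (k j i0) * \<omega> $ i0 + (\<Sum>i\<in>UNIV - {i0}. real_of_int (k j i) * \<omega> $ i)"
      by (rule sum.remove) auto
    also have "\<dots> = D (\<sigma> j)" unfolding D_def k_def using kbar_last by simp
    finally show ?thesis .
  qed
  have dnz: "dl0 j \<noteq> 0" for j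
  proof
    assume "dl0 j = 0"
    then have "(\<Sum>i\<in>UNIV. of_int (k j i) * \<omega> $ i) = 0" unfolding dl0_def by (simp add: inner_vec_def)
    then have "k j = (\<lambda>_. 0)" using nonres by blast
    then show False using \<sigma>(1)[of j] unfolding k_def by (metis)
  qed
  have small0: "\<bar>dl0 j\<bar> \<le> exp (- (9 * (real j + 1)^2) * N j)" for j
  proof -
    have N0: "0 < N j" using N1[of j] by simp
    have "ln \<bar>dl0 j\<bar> / N j \<le> - (9 * (real j + 1)^2)" using \<sigma>(2)[of j] unfolding rat_def dlD N_def by simp
    then have "ln \<bar>dl0 j\<bar> \<le> - (9 * (real j + 1)^2) * N j" using N0 by (simp add: divide_le_eq)
    then have "exp (ln \<bar>dl0 j\<bar>) \<le> exp (- (9 * (real j + 1)^2) * N j)" by simp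
    then show ?thesis using dnz[of j] by simp
  qed
  define E where "E j = exp (- ((real j+1)^2 * (N j + 1)))" for j
  define c where "c j = (if 0 < dl0 j * real_of_int (k j m) then E j else - E j)" for j
  have Epos: "0 < E j" for j unfolding E_def by simp
  have cabs: "\<bar>c j\<bar> = E j" for j unfolding c_def using Epos[of j] by simp
  have c4: "(c j)^4 = E j ^ 4" for j unfolding c_def by simp
  have loc: "sysd \<omega> i0 m k c p N" if p2: "\<And>j. 2 \<le> p j" and pj: "\<And>j. p j \<le> j + 2" for p
  proof (rule sysd.intro)
    show "\<And>j. k j i0 = 0" unfolding k_def using kbar_last by simp
    show "\<And>j. k j m \<noteq> 0" unfolding k_def by (rule \<sigma>(1))
    show "\<And>j i. \<bar>real_of_int (k j i)\<bar> \<le> N j" by (rule kN)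
    show "\<And>j. (\<chi> i. real_of_int (k j i)) \<bullet> \<omega> \<noteq> 0" using dnz unfolding dl0_def .
    show "\<And>j. 0 \<le> c j * real_of_int (k j m) / ((\<chi> i. real_of_int (k j i)) \<bullet> \<omega>)"
    proof -
      fix j
      have km0: "k j m \<noteq> 0" unfolding k_def by (rule \<sigma>(1))
      define a where "a = dl0 j * real_of_int (k j m)"
      have ca: "c j * real_of_int (k j m) * dl0 j = (if 0 < a then E j * a else - (E j * a))"
        by (simp add: c_def a_def mult_ac)
      have nn: "0 \<le> c j * real_of_int (k j m) * dl0 j"
      proof (cases "0 < a")
        case True then show ?thesis unfolding ca using Epos[of j] by simp
      next
        case False
        then have "E j * a \<le> 0" using Epos[of j] by (simp add: mult_nonneg_nonpos less_imp_le)
        then show ?thesis unfolding ca using False by simp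
      qed
      have dd: "0 < dl0 j * dl0 j" using dnz[of j] by (auto simp: zero_less_mult_iff linorder_neq_iff)
      have eq: "c j * real_of_int (k j m) / dl0 j = (c j * real_of_int (k j m) * dl0 j) / (dl0 j * dl0 j)"
        using dnz[of j] by (simp add: field_simps)
      have "0 \<le> c j * real_of_int (k j m) / dl0 j" unfolding eq by (rule divide_nonneg_pos[OF nn dd])
      then show "0 \<le> c j * real_of_int (k j m) / ((\<chi> i. real_of_int (k j i)) \<bullet> \<omega>)" unfolding dl0_def .
    qed
    show "\<And>R A. 0 \<le> R \<Longrightarrow> 0 \<le> A \<Longrightarrow>
       summable (\<lambda>j. \<bar>c j\<bar> * ((real j + 3) * (1+R)^(j+2) * (1 + A * N j) * exp (A * N j * R)))"
      unfolding cabs E_def by (rule csum_gen[OF N1])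
    show "\<And>j. 2 \<le> p j" by (rule p2)
    show "\<And>j. p j \<le> j + 2" by (rule pj)
  qed
  have small: "\<bar>dl0 j\<bar> \<le> (c j)^4 * exp (- ((real j + 1)^2))" for j
  proof -
    have "(c j)^4 * exp (- ((real j + 1)^2)) = exp (real 4 * (- ((real j+1)^2 * (N j + 1)))) * exp (- ((real j + 1)^2))"
      unfolding c4 E_def by (rule arg_cong2[where f="(*)"], rule exp_of_nat_mult[symmetric], rule refl)
    also have "\<dots> = exp (- ((real j+1)^2 * (4 * N j + 5)))" by (simp add: exp_add[symmetric] algebra_simps)
    finally have e: "(c j)^4 * exp (- ((real j + 1)^2)) = exp (- ((real j+1)^2 * (4 * N j + 5)))" .
    have "(real j+1)^2 * (4 * N j + 5) \<le> (real j+1)^2 * (9 * N j)" using N1[of j] by (intro mult_left_mono) auto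
    then have "- (9 * (real j + 1)^2) * N j \<le> - ((real j+1)^2 * (4 * N j + 5))" by (simp add: algebra_simps)
    then show ?thesis unfolding e using small0[of j] by (meson exp_le_cancel_iff order_trans)
  qed
  have cle1: "\<bar>c j\<bar> \<le> 1" for j unfolding cabs E_def using N1[of j] by simp
  have cnz: "c j \<noteq> 0" for j using cabs[of j] Epos[of j] by auto
  interpret A: sysd \<omega> i0 m k c "\<lambda>j. j + 2" N by (rule loc) auto
  interpret B: sysd \<omega> i0 m k c "\<lambda>j. 2" N by (rule loc) auto
  have Adl: "A.dl j = dl0 j" for j by (simp add: A.dl_def A.kv_def dl0_def)
  have Bdl: "B.dl j = dl0 j" for j by (simp add: B.dl_def B.kv_def dl0_def)
  have injp: "inj (\<lambda>j::nat. j + 2)" by (simp add: inj_on_def)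
  have partA: "real_entire_ham A.H \<and> ham_form A.H \<omega> \<and> has_BNF A.H (lin_coeffs \<omega>) \<and> diffusive A.H \<and>
             (\<exists>rs :: nat \<Rightarrow> real. (\<forall>n. rs n > 0) \<and> rs \<longlonglongrightarrow> 0 \<and>
                (\<forall>\<^sub>F n in sequentially. escape_times A.H (rs n) \<noteq> {} \<and>
                    T_time A.H (rs n) \<le> rs n powr (- real n)))"
    using A.real_entire A.ham_form_H A.has_BNF_H[OF injp]
      A.diffusive_H[OF small[folded Adl] cle1 cnz] A.seq_a[OF small[folded Adl] cle1 cnz] by simp
  have partB: "real_entire_ham B.H \<and> ham_form B.H \<omega> \<and> diffusive B.H \<and>
             (\<exists>rs :: nat \<Rightarrow> real. (\<forall>n. rs n > 0) \<and> rs \<longlonglongrightarrow> 0 \<and>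
                (\<forall>n. escape_times B.H (rs n) \<noteq> {} \<and> T_time B.H (rs n) \<le> rs n powr (- 4)))"
    using B.real_entire B.ham_form_H
      B.diffusive_H[OF small[folded Bdl] cle1 cnz] B.seq_b[OF small[folded Bdl] cle1 cnz] by simp
  show ?thesis using partA partB by blast
qed

end
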